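(* In the MSBM setting of the context, assume $\alpha_n\log(n)\le1/L$ and \[n\alpha_n>\max\Big(\frac{4Lc''}{\pi_m^2D^2},\ \frac{2}{L\pi_m}\Big).\] Then \[\mathbb P\Big(\mathrm{err}(\hat G,G)>\exp\big(-\tfrac{c'S^2}{2}\big)\Big)\le\frac{c}{n^2}+2K\exp\Big(-\frac{n\pi_m^2}{2A_1+4A_2\pi_m}\Big),\] where $S^2=\frac{n\alpha_n\pi_mD^2}{L}$.
   Context: MSBM: $K\ge2$ fixed; $(C_i)_{i\in[n]}$ is a positive recurrent Markov chain on $[K]$ with transition matrix $P$, stationary distribution $\pi$, $C_1\sim\pi$. $Q_0\in[0,1]^{K\times K}$ symmetric, independent of $n$; $\alpha_n\in(0,1)$; $Q=\alpha_nQ_0$; given $(C_i)$, $X_{i,j}\sim\mathrm{Ber}(Q_{C_i,C_j})$ independently for $i<j$. $L:=\max_{k,l}(Q_0)_{k,l}$, $\pi_m:=\min_c\pi(c)$, $D^2:=\min_{l\neq k}\|(Q_0)_{:,k}-(Q_0)_{:,l}\|_2^2>0$. $G_k=\{i:C_i=k\}$; $\mathrm{err}(\hat G,G)=\min_{\sigma\in\mathcal S_K}\frac1{2n}\sum_k|\hat G_k\Delta G_{\sigma(k)}|$. $\hat G$ is the output of the clustering algorithm: $\hat\beta=\min(\frac{K^3}{n}e^{2nd_X},1)$ ($d_X$ edge density), $\hat B\in\arg\max\langle XX^\top,B\rangle$ over symmetric $B$ with $\mathrm{Tr}B=K$, $B\mathbf 1=\mathbf 1$, $0\le B_{i,j}\le\hat\beta$,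 then a $7$-approximate $K$-medoids (Charikar et al.) on the rows of $\hat B$. Constants $c,c',c''>0$ are the numerical constants of the Giraud–Verzelen guarantee for this algorithm: for an SBM with fixed communities of sizes $m_k$, smallest size $m$, connectivity $\alpha_nQ_0$ with $\|Q_0\|_\infty\le L$, setting $\Delta^2=\min_{k\ne j}\sum_l m_l(Q_{k,l}-Q_{j,l})^2$ and $s^2=\Delta^2/(\alpha_nL)$, if $1/m\le\alpha_nL\le1/\log n$ and $s^2\ge c''n/m$, then with probability at least $1-c/n^2$, $\mathrm{err}(\hat G,G)\le e^{-c's^2}$. Spectral gap: for the chain $(C_i)$ with Markov operator $P$ on $L^2(\pi)$ and adjoint $P^*$, let $\lambda_+$ be the supremum of the spectrum of $(P+P^* )/2$ acting on $L^2_0(\pi)=\{h:\pi(h)=0\}$ (so $1-\lambda_+$ is the right $L^2$-spectral gap). $A_1:=\frac{1+\max(\lambda_+,0)}{1-\max(\lambda_+,0)}$, $A_2:=\frac13\mathbf 1_{\lambda_+\le0}+\frac{5}{1-\lambda_+}\mathbf 1_{\lambda_+>0}$. *)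

theory Defs
  imports "HOL-Analysis.Analysis" "HOL-Combinatorics.Permutations"
begin

text \<open>Communities are labelled 0,...,K-1 and nodes 0,...,n-1.
  A community assignment is an element of labelings n K; a graph is a set of
  unordered edges, encoded as pairs (i,j) with i < j < n.\<close>

definition labelings :: "nat \<Rightarrow> nat \<Rightarrow> (nat \<Rightarrow> nat) set" where
  "labelings n K = {..<n} \<rightarrow>\<^sub>E {..<K}"

definition pairs :: "nat \<Rightarrow> (nat \<times> nat) set" where
  "pairs n = {(i, j). i < j \<and> j < n}"

definition graphs :: "nat \<Rightarrow> (nat \<times> nat) set set" where
  "graphs n = Pow (pairs n)"

definition markov_weight ::
  "(nat \<Rightarrow> nat \<Rightarrow> real) \<Rightarrow> (nat \<Rightarrow> real) \<Rightarrow> nat \<Rightarrow> (nat \<Rightarrow> nat) \<Rightarrow> real" where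
  "markov_weight P \<pi> n C =
     (if n = 0 then 1 else \<pi> (C 0) * (\<Prod>i<n - 1. P (C i) (C (Suc i))))"

definition sbm_weight ::
  "(nat \<Rightarrow> nat \<Rightarrow> real) \<Rightarrow> nat \<Rightarrow> (nat \<Rightarrow> nat) \<Rightarrow> (nat \<times> nat) set \<Rightarrow> real" where
  "sbm_weight Q n C E =
     (\<Prod>(i, j)\<in>pairs n. if (i, j) \<in> E then Q (C i) (C j) else 1 - Q (C i) (C j))"

definition sbm_prob ::
  "(nat \<Rightarrow> nat \<Rightarrow> real) \<Rightarrow> nat \<Rightarrow> (nat \<Rightarrow> nat) \<Rightarrow> ((nat \<times> nat) set \<Rightarrow> bool) \<Rightarrow> real" where
  "sbm_prob Q n C A = (\<Sum>E\<in>{E \<in> graphs n. A E}. sbm_weight Q n C E)"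

definition msbm_prob ::
  "nat \<Rightarrow> (nat \<Rightarrow> nat \<Rightarrow> real) \<Rightarrow> (nat \<Rightarrow> real) \<Rightarrow> (nat \<Rightarrow> nat \<Rightarrow> real) \<Rightarrow> nat
    \<Rightarrow> ((nat \<Rightarrow> nat) \<Rightarrow> (nat \<times> nat) set \<Rightarrow> bool) \<Rightarrow> real" where
  "msbm_prob K P \<pi> Q n A =
     (\<Sum>C\<in>labelings n K. markov_weight P \<pi> n C * sbm_prob Q n C (A C))"

definition community :: "nat \<Rightarrow> (nat \<Rightarrow> nat) \<Rightarrow> nat \<Rightarrow> nat set" where
  "community n C k = {i. i < n \<and> C i = k}"

definition err :: "nat \<Rightarrow> nat \<Rightarrow> (nat \<Rightarrow> nat) \<Rightarrow> (nat \<Rightarrow> nat) \<Rightarrow> real" where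
  "err n K Gh G = Min ((\<lambda>\<sigma>. (\<Sum>k<K. real (card
        ((community n Gh k - community n G (\<sigma> k)) \<union> (community n G (\<sigma> k) - community n Gh k))))
        / (2 * real n)) ` {\<sigma>. \<sigma> permutes {..<K}})"

text \<open>Markov operator P and its adjoint P* on L^2(pi) over the state space {0..<K}.\<close>
definition Pop :: "nat \<Rightarrow> (nat \<Rightarrow> nat \<Rightarrow> real) \<Rightarrow> (nat \<Rightarrow> real) \<Rightarrow> nat \<Rightarrow> real" where
  "Pop K P f i = (\<Sum>j<K. P i j * f j)"

definition Padj ::
  "nat \<Rightarrow> (nat \<Rightarrow> nat \<Rightarrow> real) \<Rightarrow> (nat \<Rightarrow> real) \<Rightarrow> (nat \<Rightarrow> real) \<Rightarrow> nat \<Rightarrow> real" where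
  "Padj K P \<pi> f i = (\<Sum>j<K. \<pi> j * P j i * f j / \<pi> i)"

text \<open>lambda_+ : supremum of the spectrum of (P + P*)/2 acting on
  L^2_0(pi) = {h : pi(h) = 0}. The space is finite dimensional, so the spectrum
  consists of the eigenvalues.\<close>
definition lambda_plus :: "nat \<Rightarrow> (nat \<Rightarrow> nat \<Rightarrow> real) \<Rightarrow> (nat \<Rightarrow> real) \<Rightarrow> real" where
  "lambda_plus K P \<pi> = Sup {l. \<exists>h. (\<exists>i<K. h i \<noteq> 0) \<and> (\<Sum>i<K. \<pi> i * h i) = 0 \<and>
        (\<forall>i<K. (Pop K P h i + Padj K P \<pi> h i) / 2 = l * h i)}"

definition A1 :: "real \<Rightarrow> real" where
  "A1 lam = (1 + max lam 0) / (1 - max lam 0)"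

definition A2 :: "real \<Rightarrow> real" where
  "A2 lam = (if lam \<le> 0 then 1 / 3 else 5 / (1 - lam))"

fun mpow :: "nat \<Rightarrow> (nat \<Rightarrow> nat \<Rightarrow> real) \<Rightarrow> nat \<Rightarrow> nat \<Rightarrow> nat \<Rightarrow> real" where
  "mpow K P 0 i j = (if i = j then 1 else 0)"
| "mpow K P (Suc m) i j = (\<Sum>l<K. P i l * mpow K P m l j)"

definition Lmax :: "nat \<Rightarrow> (nat \<Rightarrow> nat \<Rightarrow> real) \<Rightarrow> real" where
  "Lmax K Q0 = Max {Q0 k l | k l. k < K \<and> l < K}"

definition pi_min :: "nat \<Rightarrow> (nat \<Rightarrow> real) \<Rightarrow> real" where
  "pi_min K \<pi> = Min (\<pi> ` {..<K})"

definition Dsq :: "nat \<Rightarrow> (nat \<Rightarrow> nat \<Rightarrow> real) \<Rightarrow> real" where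
  "Dsq K Q0 = Min {(\<Sum>r<K. (Q0 r k - Q0 r l)^2) | k l. k < K \<and> l < K \<and> l \<noteq> k}"

text \<open>The Giraud--Verzelen guarantee with constants c, c', c'' for the clustering
  map alg (graph to labels), for the SBM with n nodes, K fixed communities given
  by any labelling C0, and connectivity alpha * Q0 (with L = max Q0).\<close>
definition GV_guarantee ::
  "((nat \<times> nat) set \<Rightarrow> nat \<Rightarrow> nat) \<Rightarrow> nat \<Rightarrow> nat \<Rightarrow> real \<Rightarrow> (nat \<Rightarrow> nat \<Rightarrow> real) \<Rightarrow> real
    \<Rightarrow> real \<Rightarrow> real \<Rightarrow> real \<Rightarrow> bool" where
  "GV_guarantee alg n K \<alpha> Q0 L c c' c'' \<longleftrightarrow>
    (\<forall>C0\<in>labelings n K.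
      let msz = (\<lambda>k. real (card (community n C0 k)));
          m = Min (msz ` {..<K});
          Q = (\<lambda>k l. \<alpha> * Q0 k l);
          Delta2 = Min {(\<Sum>l<K. msz l * (Q k l - Q j l)^2) | k j. k < K \<and> j < K \<and> k \<noteq> j};
          s2 = Delta2 / (\<alpha> * L)
      in m > 0 \<and> 1 / m \<le> \<alpha> * L \<and> \<alpha> * L \<le> 1 / ln (real n) \<and> s2 \<ge> c'' * real n / m \<longrightarrow>
         sbm_prob Q n C0 (\<lambda>E. err n K (alg E) C0 > exp (- c' * s2)) \<le> c / (real n)^2)"

end

theory Submission
  imports Defs
begin


definition Tc :: "nat \<Rightarrow> (nat \<Rightarrow> nat \<Rightarrow> real) \<Rightarrow> (nat \<Rightarrow> complex) \<Rightarrow> nat \<Rightarrow> complex" where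
  "Tc K t x = (\<lambda>i. \<Sum>j<K. of_real (t i j) * x j)"

definition Tr :: "nat \<Rightarrow> (nat \<Rightarrow> nat \<Rightarrow> real) \<Rightarrow> (nat \<Rightarrow> real) \<Rightarrow> nat \<Rightarrow> real" where
  "Tr K t x = (\<lambda>i. \<Sum>j<K. t i j * x j)"

definition ipc :: "nat \<Rightarrow> (nat \<Rightarrow> real) \<Rightarrow> (nat \<Rightarrow> complex) \<Rightarrow> (nat \<Rightarrow> complex) \<Rightarrow> complex" where
  "ipc K w x y = (\<Sum>i<K. of_real (w i) * x i * cnj (y i))"

lemma Tc_lin:
  "Tc K t (\<lambda>i. \<Sum>d\<in>A. c d * v d i) = (\<lambda>i. \<Sum>d\<in>A. c d * Tc K t (v d) i)"
  unfolding Tc_def by (simp add: sum_distrib_left mult_ac sum.swap[of _ A])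

lemma Tc_real: "(Tc K t ^^ m) (\<lambda>i. of_real (x i)) = (\<lambda>i. of_real ((Tr K t ^^ m) x i))"
  by (induction m) (auto simp: Tc_def Tr_def)

lemma ipc_self: "ipc K w x x = of_real (\<Sum>i<K. w i * (cmod (x i))^2)"
  unfolding ipc_def by (simp add: mult.assoc complex_mult_cnj cmod_def)

lemma quad_bound:
  assumes w: "\<forall>i<K. w i > 0" and t: "\<forall>i<K. \<forall>j<K. t i j \<ge> 0"
    and H: "\<forall>y. (\<forall>i<K. y i \<ge> 0) \<longrightarrow> (\<Sum>i<K. w i * y i * (\<Sum>j<K. t i j * y j)) \<le> b * (\<Sum>i<K. w i * (y i)^2)"
  shows "cmod (ipc K w (Tc K t x) x) \<le> b * (\<Sum>i<K. w i * (cmod (x i))^2)"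
proof -
  have "cmod (ipc K w (Tc K t x) x) \<le> (\<Sum>i<K. cmod (of_real (w i) * Tc K t x i * cnj (x i)))"
    unfolding ipc_def by (rule norm_sum)
  also have "\<dots> \<le> (\<Sum>i<K. w i * cmod (x i) * (\<Sum>j<K. t i j * cmod (x j)))"
  proof (rule sum_mono)
    fix i assume i: "i \<in> {..<K}"
    have "cmod (Tc K t x i) \<le> (\<Sum>j<K. cmod (of_real (t i j) * x j))"
      unfolding Tc_def by (rule norm_sum)
    also have "\<dots> = (\<Sum>j<K. t i j * cmod (x j))"
      using t i by (auto intro!: sum.cong simp: norm_mult)
    finally have Tb: "cmod (Tc K t x i) \<le> (\<Sum>j<K. t i j * cmod (x j))" .
    then show "cmod (of_real (w i) * Tc K t x i * cnj (x i)) \<le> w i * cmod (x i) * (\<Sum>j<K. t i j * cmod (x j))"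
    proof -
      have "cmod (of_real (w i) * Tc K t x i * cnj (x i)) = w i * cmod (x i) * cmod (Tc K t x i)"
        using w i by (simp add: norm_mult abs_of_pos)
      also have "\<dots> \<le> w i * cmod (x i) * (\<Sum>j<K. t i j * cmod (x j))"
        using w i by (intro mult_left_mono) (auto intro: Tb)
      finally show ?thesis .
    qed
  qed
  also have "\<dots> \<le> b * (\<Sum>i<K. w i * (cmod (x i))^2)"
    using H[rule_format, of "\<lambda>i. cmod (x i)"] by simp
  finally show ?thesis .
qed

lemma ipc_add_left: "ipc K w (\<lambda>i. x i - y i) z = ipc K w x z - ipc K w y z"
  unfolding ipc_def by (simp add: algebra_simps sum_subtractf)

lemma ipc_sum_right: "ipc K w z (\<lambda>i. \<Sum>k\<in>A. y k i) = (\<Sum>k\<in>A. ipc K w z (y k))"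
  unfolding ipc_def by (simp add: sum_distrib_left sum.swap[of _ A])

lemma ipc_scal_left: "ipc K w (\<lambda>i. c * x i) z = c * ipc K w x z"
  unfolding ipc_def by (simp add: sum_distrib_left mult_ac)

lemma ipc_real_right: "ipc K w z (\<lambda>i. of_real r * x i) = of_real r * ipc K w z x"
  unfolding ipc_def by (simp add: sum_distrib_left mult_ac)

lemma root_sum:
  fixes m d :: nat assumes "d < m"
  shows "(\<Sum>k<m. cis (2*pi/m) ^ (k*d)) = (if d = 0 then of_nat m else 0)"
proof (cases "d = 0")
  case True then show ?thesis by simp
next
  case False
  have m: "m > 0" using assms by simp
  have ne: "cis (2*pi/m) ^ d \<noteq> 1"
  proof
    assume "cis (2*pi/m) ^ d = 1"
    moreover have "cis (2*pi/m) ^ d = cis (2*pi*real d/real m)"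
      unfolding Complex.DeMoivre by (simp add: field_simps)
    ultimately have "cis (2*pi*real d/real m) = cis (2*pi*real 0/real m)"
      by simp
    moreover have "inj_on (\<lambda>k. cis (2 * pi * real k / real m)) {..<m}"
      using Complex.bij_betw_roots_unity[OF m] by (simp add: bij_betw_def)
    ultimately have "d = 0" using assms m inj_onD[of "\<lambda>k. cis (2 * pi * real k / real m)" "{..<m}" d 0]
      by simp
    then show False using False by simp
  qed
  have pm: "(cis (2*pi/m) ^ d) ^ m = 1"
  proof -
    have "(cis (2*pi/m) ^ d) ^ m = cis (2*pi*real d)"
      using m unfolding power_mult[symmetric] Complex.DeMoivre by (simp add: field_simps)
    also have "\<dots> = 1" using cis_multiple_2pi[of "real d"] by simp
    finally show ?thesis .
  qed
  have "(\<Sum>k<m. cis (2*pi/m) ^ (k*d)) = (\<Sum>k<m. (cis (2*pi/m) ^ d) ^ k)"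
    by (simp add: power_mult mult.commute[of _ d])
  also have "\<dots> = 0" using ne pm by (simp add: sum_gp_strict)
  finally show ?thesis using False by simp
qed

lemma power_ineq_c:
  assumes w: "\<forall>i<K. w i > 0" and t: "\<forall>i<K. \<forall>j<K. t i j \<ge> 0" and b: "b > 0"
    and H: "\<forall>y. (\<forall>i<K. y i \<ge> 0) \<longrightarrow> (\<Sum>i<K. w i * y i * (\<Sum>j<K. t i j * y j)) \<le> b * (\<Sum>i<K. w i * (y i)^2)"
    and m: "m > 0"
  shows "Re (ipc K w ((Tc K t ^^ m) x) x) \<le> b^m * (\<Sum>i<K. w i * (cmod (x i))^2)"
proof -
  define \<omega> where "\<omega> = cis (2*pi/m)"
  define T where "T = Tc K t"
  define X where "X k = (\<lambda>i. \<Sum>d<m. (\<omega>^(k*d) * of_real (b^(m-1-d))) * (T ^^ d) x i)" for k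
  define z where "z = (\<lambda>i. of_real (b^m) * x i - (T ^^ m) x i)"
  have om: "\<omega> ^ (k*m) = 1" for k
  proof -
    have "\<omega> ^ (k*m) = cis (2*pi*real k)"
      using m unfolding \<omega>_def power_mult[symmetric] Complex.DeMoivre by (simp add: field_simps)
    also have "\<dots> = 1" using cis_multiple_2pi[of "real k"] by simp
    finally show ?thesis .
  qed
  have TX: "T (X k) = (\<lambda>i. \<Sum>d<m. (\<omega>^(k*d) * of_real (b^(m-1-d))) * (T ^^ Suc d) x i)" for k
    unfolding X_def T_def by (simp add: Tc_lin)
  have key: "(\<lambda>i. of_real b * X k i - \<omega>^k * T (X k) i) = z" for k
  proof
    fix i
    define a where "a d = \<omega>^(k*d) * of_real (b^(m-d)) * (T ^^ d) x i" for d
    have 1: "of_real b * X k i = (\<Sum>d<m. a d)"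
      unfolding X_def a_def sum_distrib_left
    proof (rule sum.cong[OF refl])
      fix d assume "d \<in> {..<m}"
      then have "b * b^(m-1-d) = b^(m-d)"
        by (metis Suc_diff_Suc lessThan_iff diff_Suc_1 power_Suc Suc_pred m diff_commute)
      then show "of_real b * (\<omega> ^ (k * d) * of_real (b ^ (m - 1 - d)) * (T ^^ d) x i) =
          \<omega> ^ (k * d) * of_real (b ^ (m - d)) * (T ^^ d) x i"
        by (metis (no_types, lifting) mult.assoc mult.left_commute of_real_mult)
    qed
    have 2: "\<omega>^k * T (X k) i = (\<Sum>d<m. a (Suc d))"
      unfolding TX a_def sum_distrib_left
      by (rule sum.cong[OF refl]) (simp add: algebra_simps power_add)
    have "of_real b * X k i - \<omega>^k * T (X k) i = (\<Sum>d<m. a d - a (Suc d))"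
      unfolding 1 2 by (simp add: sum_subtractf)
    also have "\<dots> = a 0 - a m" by (rule sum_lessThan_telescope')
    also have "\<dots> = z i" unfolding a_def z_def using om[of k] by (simp add: mult.commute[of k])
    finally show "of_real b * X k i - \<omega>^k * T (X k) i = z i" .
  qed
  have sumX: "(\<lambda>i. \<Sum>k<m. X k i) = (\<lambda>i. of_real (real m * b^(m-1)) * x i)"
  proof
    fix i
    have "(\<Sum>k<m. X k i) = (\<Sum>d<m. (\<Sum>k<m. \<omega>^(k*d)) * (of_real (b^(m-1-d)) * (T ^^ d) x i))"
      unfolding X_def
      by (subst sum.swap) (simp add: sum_distrib_right mult.assoc)
    also have "\<dots> = (\<Sum>d<m. (if d = 0 then of_nat m * (of_real (b^(m-1)) * x i) else 0))"
      by (rule sum.cong[OF refl]) (auto simp: \<omega>_def root_sum)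
    also have "\<dots> = of_nat m * (of_real (b^(m-1)) * x i)"
      using m by (simp add: sum.delta)
    finally show "(\<Sum>k<m. X k i) = of_real (real m * b^(m-1)) * x i" by simp
  qed
  have "(\<Sum>k<m. ipc K w (\<lambda>i. of_real b * X k i - \<omega>^k * T (X k) i) (X k)) = (\<Sum>k<m. ipc K w z (X k))"
    using key by simp
  also have "\<dots> = ipc K w z (\<lambda>i. \<Sum>k<m. X k i)" by (simp add: ipc_sum_right)
  also have "\<dots> = of_real (real m * b^(m-1)) * ipc K w z x" unfolding sumX ipc_real_right ..
  finally have eq: "of_real (real m * b^(m-1)) * ipc K w z x =
      (\<Sum>k<m. of_real b * ipc K w (X k) (X k) - \<omega>^k * ipc K w (T (X k)) (X k))"
    by (simp add: ipc_add_left ipc_scal_left)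
  have "0 \<le> Re (\<Sum>k<m. of_real b * ipc K w (X k) (X k) - \<omega>^k * ipc K w (T (X k)) (X k))"
    unfolding Re_sum
  proof (rule sum_nonneg)
    fix k
    have nw: "cmod \<omega> = 1" unfolding \<omega>_def by simp
    have q: "cmod (ipc K w (T (X k)) (X k)) \<le> b * (\<Sum>i<K. w i * (cmod (X k i))^2)"
      unfolding T_def by (rule quad_bound[OF w t H])
    have "Re (\<omega>^k * ipc K w (T (X k)) (X k)) \<le> cmod (\<omega>^k * ipc K w (T (X k)) (X k))"
      by (rule complex_Re_le_cmod)
    also have "\<dots> = cmod (ipc K w (T (X k)) (X k))" by (simp add: norm_mult norm_power nw)
    finally show "0 \<le> Re (of_real b * ipc K w (X k) (X k) - \<omega>^k * ipc K w (T (X k)) (X k))"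
      using q by (simp add: ipc_self)
  qed
  then have "0 \<le> Re (of_real (real m * b^(m-1)) * ipc K w z x)" unfolding eq .
  moreover have "real m * b^(m-1) > 0" using m b by simp
  ultimately have "0 \<le> Re (ipc K w z x)"
    by (simp add: zero_le_mult_iff)
  moreover have "ipc K w z x = of_real (b^m) * ipc K w x x - ipc K w ((T ^^ m) x) x"
    unfolding z_def ipc_add_left ipc_scal_left ..
  ultimately show ?thesis unfolding T_def by (simp add: ipc_self)
qed

lemma power_ineq:
  assumes w: "\<forall>i<K. w i > 0" and t: "\<forall>i<K. \<forall>j<K. t i j \<ge> 0" and b: "b > 0"
    and H: "\<forall>y. (\<forall>i<K. y i \<ge> 0) \<longrightarrow> (\<Sum>i<K. w i * y i * (\<Sum>j<K. t i j * y j)) \<le> b * (\<Sum>i<K. w i * (y i)^2)"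
  shows "(\<Sum>i<K. w i * x i * (Tr K t ^^ m) x i) \<le> b^m * (\<Sum>i<K. w i * (x i)^2)"
proof (cases "m = 0")
  case True then show ?thesis by (simp add: power2_eq_square mult.assoc)
next
  case False
  have "Re (ipc K w ((Tc K t ^^ m) (\<lambda>i. of_real (x i))) (\<lambda>i. of_real (x i))) \<le>
      b^m * (\<Sum>i<K. w i * (cmod (of_real (x i)))^2)"
    using False by (intro power_ineq_c[OF w t b H]) simp
  moreover have "Re (ipc K w ((Tc K t ^^ m) (\<lambda>i. of_real (x i))) (\<lambda>i. of_real (x i))) =
      (\<Sum>i<K. w i * x i * (Tr K t ^^ m) x i)"
    unfolding Tc_real ipc_def by (simp add: Re_sum mult_ac)
  ultimately show ?thesis by simp
qed


definition ipr :: "nat \<Rightarrow> (nat \<Rightarrow> real) \<Rightarrow> (nat \<Rightarrow> real) \<Rightarrow> (nat \<Rightarrow> real) \<Rightarrow> real" where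
  "ipr K \<pi> u v = (\<Sum>i<K. \<pi> i * u i * v i)"

definition mn :: "nat \<Rightarrow> (nat \<Rightarrow> real) \<Rightarrow> (nat \<Rightarrow> real) \<Rightarrow> real" where
  "mn K \<pi> u = (\<Sum>i<K. \<pi> i * u i)"

locale mchain =
  fixes K :: nat and P :: "nat \<Rightarrow> nat \<Rightarrow> real" and \<pi> :: "nat \<Rightarrow> real"
  assumes P_nonneg: "\<forall>i<K. \<forall>j<K. P i j \<ge> 0"
    and P_stoch: "\<forall>i<K. (\<Sum>j<K. P i j) = 1"
    and pi_pos: "\<forall>i<K. \<pi> i > 0"
    and pi_sum: "(\<Sum>i<K. \<pi> i) = 1"
    and pi_stat: "\<forall>j<K. (\<Sum>i<K. \<pi> i * P i j) = \<pi> j"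
begin

abbreviation "N u \<equiv> ipr K \<pi> u u"
abbreviation "Qf u \<equiv> ipr K \<pi> u (Pop K P u) - (mn K \<pi> u)^2"

lemma mean_Pop: "mn K \<pi> (Pop K P u) = mn K \<pi> u"
proof -
  have "mn K \<pi> (Pop K P u) = (\<Sum>j<K. (\<Sum>i<K. \<pi> i * P i j) * u j)"
    unfolding mn_def Pop_def sum_distrib_left sum_distrib_right by (subst sum.swap) (simp add: mult_ac)
  also have "\<dots> = mn K \<pi> u" unfolding mn_def using pi_stat by simp
  finally show ?thesis .
qed

lemma mean_Padj: "mn K \<pi> (Padj K P \<pi> u) = mn K \<pi> u"
proof -
  have "mn K \<pi> (Padj K P \<pi> u) = (\<Sum>i<K. \<Sum>j<K. \<pi> j * P j i * u j)"
    unfolding mn_def Padj_def using pi_pos by (auto simp: sum_distrib_left intro!: sum.cong)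
  also have "\<dots> = (\<Sum>j<K. \<pi> j * u j * (\<Sum>i<K. P j i))"
    by (subst sum.swap) (simp add: sum_distrib_left mult_ac)
  also have "\<dots> = mn K \<pi> u" unfolding mn_def using P_stoch by simp
  finally show ?thesis .
qed

lemma ip_Padj: "ipr K \<pi> h (Padj K P \<pi> u) = ipr K \<pi> (Pop K P h) u"
proof -
  have "ipr K \<pi> h (Padj K P \<pi> u) = (\<Sum>i<K. \<Sum>j<K. \<pi> j * P j i * u j * h i)"
    unfolding ipr_def Padj_def using pi_pos by (auto simp: sum_distrib_left mult_ac intro!: sum.cong)
  also have "\<dots> = ipr K \<pi> (Pop K P h) u"
    unfolding ipr_def Pop_def by (subst sum.swap) (simp add: sum_distrib_left sum_distrib_right mult_ac)
  finally show ?thesis .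
qed

lemma N_nonneg: "N u \<ge> 0"
  unfolding ipr_def using pi_pos by (auto intro!: sum_nonneg simp: mult.assoc)

lemma N_pos: assumes "i < K" "u i \<noteq> 0" shows "N u > 0"
proof -
  have "0 < u i * u i" using assms(2) not_real_square_gt_zero by blast
  then have "0 < \<pi> i * u i * u i" using assms pi_pos by (simp add: mult.assoc)
  also have "\<dots> \<le> N u" unfolding ipr_def using assms pi_pos
    by (intro member_le_sum) (auto simp: mult.assoc)
  finally show ?thesis .
qed

lemma ipP_le_N: "ipr K \<pi> h (Pop K P h) \<le> N h"
proof -
  have "ipr K \<pi> h (Pop K P h) = (\<Sum>i<K. \<Sum>j<K. \<pi> i * P i j * (h i * h j))"
    unfolding ipr_def Pop_def by (simp add: sum_distrib_left mult_ac)
  also have "\<dots> \<le> (\<Sum>i<K. \<Sum>j<K. \<pi> i * P i j * (((h i)^2 + (h j)^2)/2))"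
  proof (intro sum_mono)
    fix i j assume "i \<in> {..<K}" "j \<in> {..<K}"
    then have "\<pi> i > 0" "P i j \<ge> 0" using pi_pos P_nonneg by auto
    then have "\<pi> i * P i j \<ge> 0" by simp
    moreover have "h i * h j \<le> ((h i)^2 + (h j)^2)/2" using sum_squares_bound[of "h i" "h j"]
      by (simp add: power2_eq_square)
    ultimately show "\<pi> i * P i j * (h i * h j) \<le> \<pi> i * P i j * (((h i)^2 + (h j)^2)/2)"
      by (rule mult_left_mono[rotated])
  qed
  also have "\<dots> = (\<Sum>i<K. \<pi> i * (h i)^2 * (\<Sum>j<K. P i j))/2 + (\<Sum>j<K. (\<Sum>i<K. \<pi> i * P i j) * (h j)^2)/2"
  proof -
    have "(\<Sum>i<K. \<Sum>j<K. \<pi> i * P i j * (((h i)^2 + (h j)^2)/2)) =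
        (\<Sum>i<K. \<Sum>j<K. \<pi> i * P i j * (h i)^2/2) + (\<Sum>i<K. \<Sum>j<K. \<pi> i * P i j * (h j)^2/2)"
      by (simp add: sum.distrib[symmetric] add_divide_distrib distrib_left)
    also have "(\<Sum>i<K. \<Sum>j<K. \<pi> i * P i j * (h j)^2/2) = (\<Sum>j<K. \<Sum>i<K. \<pi> i * P i j * (h j)^2/2)"
      by (rule sum.swap)
    finally show ?thesis
      by (simp add: sum_distrib_left sum_distrib_right sum_divide_distrib mult_ac)
  qed
  also have "\<dots> = N h"
    using P_stoch pi_stat unfolding ipr_def by (simp add: power2_eq_square mult.assoc)
  finally show ?thesis .
qed

lemma box_compact: "compact (PiE UNIV (\<lambda>i::nat. if i < K then {-M..M} else {0::real}))"
proof -
  have "compactin (product_topology (\<lambda>i. euclidean) UNIV) (PiE UNIV (\<lambda>i::nat. if i < K then {-M..M} else {0::real}))"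
    by (subst compactin_PiE) auto
  then show ?thesis by (simp add: euclidean_product_topology)
qed

lemma cont_coord [continuous_intros]: "continuous_on S (\<lambda>x::nat \<Rightarrow> real. x i)"
  by (rule continuous_on_subset[OF continuous_on_product_coordinates]) auto

lemma cont_N: "continuous_on S (\<lambda>u. N u)"
  unfolding ipr_def by (intro continuous_intros)

lemma cont_Q: "continuous_on S (\<lambda>u. Qf u)"
  unfolding ipr_def mn_def Pop_def by (intro continuous_intros)

lemma exists_max:
  assumes K: "K > 0"
  shows "\<exists>u. (\<forall>i. i \<ge> K \<longrightarrow> u i = 0) \<and> N u = 1 \<and>
     (\<forall>v. (\<forall>i. i \<ge> K \<longrightarrow> v i = 0) \<and> N v = 1 \<longrightarrow> Qf v \<le> Qf u)"
proof -
  define M where "M = (\<Sum>i<K. 1 / \<pi> i)"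
  define B where "B = PiE UNIV (\<lambda>i::nat. if i < K then {-M..M} else {0::real})"
  define S where "S = {u. (\<forall>i. i \<ge> K \<longrightarrow> u i = 0) \<and> N u = 1}"
  have SB: "S = B \<inter> {u. N u = 1}"
  proof (intro equalityI subsetI)
    fix u assume u: "u \<in> S"
    have "u i \<in> {-M..M}" if i: "i < K" for i
    proof -
      have pi1: "\<pi> i \<le> 1"
      proof -
        have "\<pi> i \<le> (\<Sum>j<K. \<pi> j)" using i pi_pos
          by (intro member_le_sum) (auto simp: less_imp_le)
        then show ?thesis using pi_sum by simp
      qed
      have "\<pi> i * u i * u i \<le> N u" unfolding ipr_def using i pi_pos
        by (intro member_le_sum) (auto simp: mult.assoc)
      then have "\<pi> i * (u i)^2 \<le> 1" using u by (simp add: S_def power2_eq_square mult.assoc)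
      then have "(u i)^2 \<le> 1 / \<pi> i" using pi_pos i by (simp add: field_simps)
      also have "\<dots> \<le> (1 / \<pi> i)^2" using pi1 pi_pos i
        by (simp add: power2_eq_square field_simps)
      finally have "\<bar>u i\<bar> \<le> 1 / \<pi> i" using pi_pos i
        by (metis abs_le_square_iff abs_of_pos zero_less_divide_1_iff)
      also have "1 / \<pi> i \<le> M" unfolding M_def using i pi_pos
        by (intro member_le_sum) (auto simp: less_imp_le)
      finally show ?thesis by auto
    qed
    then show "u \<in> B \<inter> {u. N u = 1}" using u unfolding B_def S_def by (auto simp: PiE_iff)
  next
    fix u assume "u \<in> B \<inter> {u. N u = 1}"
    then have u: "\<forall>i. u i \<in> (if i < K then {-M..M} else {0})" "N u = 1" by (auto simp: B_def PiE_iff)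
    have "\<forall>i. i \<ge> K \<longrightarrow> u i = 0"
    proof (intro allI impI)
      fix i assume "K \<le> i" then show "u i = 0" using u(1)[rule_format, of i] by simp
    qed
    then show "u \<in> S" using u(2) unfolding S_def by auto
  qed
  have cS: "compact S" unfolding SB B_def
    by (intro compact_Int_closed box_compact closed_Collect_eq cont_N continuous_intros)
  define u0 where "u0 = (\<lambda>i::nat. if i = 0 then 1 / sqrt (\<pi> 0) else 0)"
  have "N u0 = \<pi> 0 * (1 / sqrt (\<pi> 0)) * (1 / sqrt (\<pi> 0))"
    unfolding ipr_def u0_def using K by (simp add: sum.delta if_distrib cong: if_cong)
  also have "\<dots> = 1"
  proof -
    have p0: "\<pi> 0 > 0" using pi_pos K by simp
    then have "sqrt (\<pi> 0) * sqrt (\<pi> 0) = \<pi> 0" by simp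
    then show ?thesis using p0 by (simp add: field_simps)
  qed
  finally have "N u0 = 1" .
  moreover have "\<forall>i. i \<ge> K \<longrightarrow> u0 i = 0" using K by (auto simp: u0_def)
  ultimately have "u0 \<in> S" unfolding S_def by auto
  then have "S \<noteq> {}" by auto
  from continuous_attains_sup[OF cS this cont_Q] obtain u where "u \<in> S" "\<forall>v\<in>S. Qf v \<le> Qf u"
    by blast
  then show ?thesis unfolding S_def by auto
qed

lemma sum_delta_mult: assumes "i < K"
  shows "(\<Sum>j<K. f j * (if j = i then 1 else 0) * g j) = f i * (g i :: real)"
proof -
  have "(\<Sum>j<K. f j * (if j = i then 1 else 0) * g j) = (\<Sum>j<K. if j = i then f i * g i else 0)"
    by (rule sum.cong) auto
  then show ?thesis using assms by simp
qed

lemma QN_cong: assumes "\<forall>i<K. u i = v i" shows "Qf u = Qf v" "N u = N v"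
proof -
  have "Pop K P u i = Pop K P v i" for i unfolding Pop_def using assms by simp
  then show "Qf u = Qf v" "N u = N v" unfolding ipr_def mn_def using assms by simp_all
qed

lemma QN_scale: "Qf (\<lambda>i. c * u i) = c^2 * Qf u" "N (\<lambda>i. c * u i) = c^2 * N u"
proof -
  have "Pop K P (\<lambda>i. c * u i) i = c * Pop K P u i" for i unfolding Pop_def
    by (simp add: sum_distrib_left mult_ac)
  then show "Qf (\<lambda>i. c * u i) = c^2 * Qf u" "N (\<lambda>i. c * u i) = c^2 * N u"
    unfolding ipr_def mn_def by (simp_all add: sum_distrib_left power2_eq_square algebra_simps)
qed

lemma QN_expand:
  "N (\<lambda>i. u i + t * v i) = N u + 2 * t * ipr K \<pi> u v + t^2 * N v"
  "Qf (\<lambda>i. u i + t * v i) = Qf u + t * (ipr K \<pi> u (Pop K P v) + ipr K \<pi> v (Pop K P u) - 2 * mn K \<pi> u * mn K \<pi> v) + t^2 * Qf v"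
proof -
  have Pl: "Pop K P (\<lambda>i. u i + t * v i) i = Pop K P u i + t * Pop K P v i" for i unfolding Pop_def
    by (simp add: sum_distrib_left sum.distrib algebra_simps)
  show "N (\<lambda>i. u i + t * v i) = N u + 2 * t * ipr K \<pi> u v + t^2 * N v"
    unfolding ipr_def by (simp add: sum_distrib_left sum.distrib power2_eq_square algebra_simps)
  have "mn K \<pi> (\<lambda>i. u i + t * v i) = mn K \<pi> u + t * mn K \<pi> v" unfolding mn_def
    by (simp add: sum_distrib_left sum.distrib algebra_simps)
  moreover have "ipr K \<pi> (\<lambda>i. u i + t * v i) (Pop K P (\<lambda>i. u i + t * v i)) =
     ipr K \<pi> u (Pop K P u) + t * (ipr K \<pi> u (Pop K P v) + ipr K \<pi> v (Pop K P u)) + t^2 * ipr K \<pi> v (Pop K P v)"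
    unfolding Pl ipr_def by (simp add: sum_distrib_left sum.distrib power2_eq_square algebra_simps)
  ultimately show "Qf (\<lambda>i. u i + t * v i) = Qf u + t * (ipr K \<pi> u (Pop K P v) + ipr K \<pi> v (Pop K P u) - 2 * mn K \<pi> u * mn K \<pi> v) + t^2 * Qf v"
    by (simp add: power2_eq_square algebra_simps)
qed

lemma quad_zero: fixes A B :: real assumes "\<forall>t. t * A + t^2 * B \<le> 0" shows "A = 0"
proof -
  define C where "C = \<bar>B\<bar> + 1"
  have d: "C > 0" "C + B \<ge> 1" unfolding C_def by auto
  define t where "t = A / C"
  have "t * A + t^2 * B = A^2 * (C + B) / C^2"
    unfolding t_def using d by (simp add: field_simps power2_eq_square)
  moreover have "A^2 * (C + B) / C^2 \<ge> A^2 / C^2"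
    using d by (intro divide_right_mono) (auto simp: mult_le_cancel_left1)
  ultimately have "A^2 / C^2 \<le> 0" using assms[rule_format, of t] by linarith
  then have "A^2 \<le> 0" using d by (simp add: divide_le_0_iff)
  then show ?thesis by simp
qed

lemma eig_le_one:
  assumes "(\<exists>i<K. h i \<noteq> 0)" "\<forall>i<K. (Pop K P h i + Padj K P \<pi> h i) / 2 = l * h i"
  shows "l \<le> 1"
proof -
  obtain i where i: "i < K" "h i \<noteq> 0" using assms(1) by auto
  have "l * N h = (\<Sum>i<K. \<pi> i * h i * (l * h i))" unfolding ipr_def
    by (simp add: sum_distrib_left mult_ac)
  also have "\<dots> = (\<Sum>i<K. \<pi> i * h i * ((Pop K P h i + Padj K P \<pi> h i) / 2))"
    using assms(2) by simp
  also have "\<dots> = (ipr K \<pi> h (Pop K P h) + ipr K \<pi> h (Padj K P \<pi> h)) / 2"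
    unfolding ipr_def sum.distrib[symmetric] sum_divide_distrib
    by (rule sum.cong) (simp_all add: algebra_simps)
  also have "\<dots> = ipr K \<pi> h (Pop K P h)" unfolding ip_Padj
    by (simp add: ipr_def mult_ac)
  also have "\<dots> \<le> 1 * N h" using ipP_le_N by simp
  finally show ?thesis using N_pos[of i h, OF i] by (simp add: mult_le_cancel_right)
qed

definition "eigset = {l. \<exists>h. (\<exists>i<K. h i \<noteq> 0) \<and> (\<Sum>i<K. \<pi> i * h i) = 0 \<and>
        (\<forall>i<K. (Pop K P h i + Padj K P \<pi> h i) / 2 = l * h i)}"

lemma lp_eq: "lambda_plus K P \<pi> = Sup eigset" unfolding lambda_plus_def eigset_def ..

lemma bdd_eig: "bdd_above eigset"
  unfolding eigset_def by (rule bdd_aboveI[of _ 1]) (auto intro: eig_le_one)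

lemma Q_le_lam0:
  assumes K: "K > 0"
  shows "Qf w \<le> max (lambda_plus K P \<pi>) 0 * N w"
proof -
  obtain u where u0: "\<forall>i. i \<ge> K \<longrightarrow> u i = 0" and u1: "N u = 1"
    and umax: "\<forall>v. (\<forall>i. i \<ge> K \<longrightarrow> v i = 0) \<and> N v = 1 \<longrightarrow> Qf v \<le> Qf u"
    using exists_max[OF K] by blast
  define r where "r = Qf u"
  have all: "Qf w \<le> r * N w" for w
  proof (cases "N w = 0")
    case True
    have "\<forall>i<K. w i = 0 * w i"
    proof (intro allI impI)
      fix i assume "i < K" then show "w i = 0 * w i" using N_pos[of i w] True by (cases "w i = 0") auto
    qed
    then have "Qf w = Qf (\<lambda>i. 0 * w i)" by (rule QN_cong)
    also have "\<dots> = 0" unfolding QN_scale by simp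
    finally show ?thesis using True by simp
  next
    case False
    then have Np: "N w > 0" using N_nonneg[of w] by simp
    define c where "c = 1 / sqrt (N w)"
    define w' where "w' = (\<lambda>i. if i < K then c * w i else 0)"
    have c2: "c^2 * N w = 1" unfolding c_def using Np by (simp add: power_divide)
    have e: "\<forall>i<K. w' i = c * w i" unfolding w'_def by simp
    have "N w' = 1" using QN_cong(2)[OF e] QN_scale(2) c2 by simp
    moreover have "\<forall>i. i \<ge> K \<longrightarrow> w' i = 0" unfolding w'_def by simp
    ultimately have "Qf w' \<le> r" using umax r_def by blast
    then have "c^2 * Qf w \<le> r" using QN_cong(1)[OF e] QN_scale(1) by simp
    then have "c^2 * Qf w \<le> r * (c^2 * N w)" using c2 by simp
    moreover have "c^2 > 0" unfolding c_def using Np by simp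
    ultimately show ?thesis by (simp add: mult.left_commute[of r])
  qed
  define Adj where "Adj = (\<lambda>v. ipr K \<pi> u (Pop K P v) + ipr K \<pi> v (Pop K P u) - 2 * mn K \<pi> u * mn K \<pi> v - 2 * r * ipr K \<pi> u v)"
  have A0: "Adj v = 0" for v
  proof (rule quad_zero[where B = "Qf v - r * N v"], rule allI)
    fix t
    have "Qf (\<lambda>i. u i + t * v i) \<le> r * N (\<lambda>i. u i + t * v i)" by (rule all)
    then show "t * Adj v + t^2 * (Qf v - r * N v) \<le> 0"
      unfolding QN_expand Adj_def r_def using u1 by (simp add: algebra_simps)
  qed
  have eig: "Padj K P \<pi> u i + Pop K P u i = 2 * mn K \<pi> u + 2 * r * u i" if i: "i < K" for i
  proof -
    define d where "d = (\<lambda>j::nat. if j = i then 1 else (0::real))"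
    have "Pop K P d c = P c i" for c unfolding Pop_def d_def using i by (simp add: if_distrib cong: if_cong)
    then have 1: "ipr K \<pi> u (Pop K P d) = \<pi> i * Padj K P \<pi> u i"
    proof -
      have pin: "\<pi> i \<noteq> 0" using pi_pos i by auto
      show ?thesis unfolding ipr_def Padj_def using pin \<open>\<And>c. Pop K P d c = P c i\<close>
        by (simp add: sum_distrib_left mult_ac)
    qed
    have 2: "ipr K \<pi> d (Pop K P u) = \<pi> i * Pop K P u i"
      unfolding ipr_def d_def using sum_delta_mult[OF i, of \<pi> "Pop K P u"] by simp
    have 3: "mn K \<pi> d = \<pi> i" unfolding mn_def d_def using sum_delta_mult[OF i, of \<pi> "\<lambda>_. 1"] by simp
    have 4: "ipr K \<pi> u d = \<pi> i * u i" unfolding ipr_def d_def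
      using sum_delta_mult[OF i, of "\<lambda>j. \<pi> j * u j" "\<lambda>_. 1"] by (simp add: mult_ac)
    have "\<pi> i * (Padj K P \<pi> u i + Pop K P u i) = \<pi> i * (2 * mn K \<pi> u + 2 * r * u i)"
      using A0[of d] unfolding Adj_def 1 2 3 4 by (simp add: algebra_simps)
    moreover have "\<pi> i \<noteq> 0" using pi_pos i by auto
    ultimately show ?thesis by simp
  qed
  have rm: "r * mn K \<pi> u = 0"
  proof -
    have "mn K \<pi> (Padj K P \<pi> u) + mn K \<pi> (Pop K P u) = (\<Sum>i<K. \<pi> i * (Padj K P \<pi> u i + Pop K P u i))"
      unfolding mn_def by (simp add: sum.distrib algebra_simps)
    also have "\<dots> = (\<Sum>i<K. \<pi> i * (2 * mn K \<pi> u + 2 * r * u i))" using eig by simp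
    also have "\<dots> = 2 * mn K \<pi> u * (\<Sum>i<K. \<pi> i) + 2 * r * mn K \<pi> u"
    proof -
      have "(\<Sum>i<K. \<pi> i * (2 * M + 2 * r * u i)) = 2 * M * (\<Sum>i<K. \<pi> i) + 2 * r * mn K \<pi> u" for M
        unfolding mn_def by (simp add: sum.distrib algebra_simps sum_distrib_left sum_distrib_right)
      then show ?thesis .
    qed
    finally show ?thesis unfolding mean_Padj mean_Pop using pi_sum by simp
  qed
  have "r \<le> max (lambda_plus K P \<pi>) 0"
  proof (cases "r > 0")
    case False then show ?thesis by simp
  next
    case True
    then have m0: "mn K \<pi> u = 0" using rm by simp
    have "\<exists>i<K. u i \<noteq> 0"
    proof (rule ccontr)
      assume "\<not> (\<exists>i<K. u i \<noteq> 0)"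
      then have "N u = 0" unfolding ipr_def by simp
      then show False using u1 by simp
    qed
    moreover have "\<forall>i<K. (Pop K P u i + Padj K P \<pi> u i) / 2 = r * u i" using eig m0 by (simp add: algebra_simps)
    ultimately have "r \<in> eigset" unfolding eigset_def using m0 by (auto simp: mn_def)
    then have "r \<le> Sup eigset" by (rule cSup_upper[OF _ bdd_eig])
    then show ?thesis unfolding lp_eq by simp
  qed
  then show ?thesis using all[of w] N_nonneg[of w]
    by (meson mult_right_mono order_trans)
qed

lemma quad_lambda:
  assumes K: "K > 0"
  shows "ipr K \<pi> u (Pop K P u) \<le> max (lambda_plus K P \<pi>) 0 * N u + (1 - max (lambda_plus K P \<pi>) 0) * (mn K \<pi> u)^2"
proof -
  define a where "a = mn K \<pi> u"
  define v where "v = (\<lambda>i. u i + (-a) * 1)"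
  define l where "l = max (lambda_plus K P \<pi>) 0"
  have P1: "Pop K P (\<lambda>_. 1) i = 1" if "i < K" for i unfolding Pop_def using P_stoch that by simp
  have ip1: "ipr K \<pi> (\<lambda>_. 1) (Pop K P u) = a" unfolding a_def using mean_Pop
    by (simp add: ipr_def mn_def)
  have ipu1: "ipr K \<pi> u (Pop K P (\<lambda>_. 1)) = a" unfolding a_def ipr_def mn_def using P1 by simp
  have m1: "mn K \<pi> (\<lambda>_. 1) = 1" unfolding mn_def using pi_sum by simp
  have N1: "N (\<lambda>_. 1) = 1" unfolding ipr_def using pi_sum by simp
  have iu1: "ipr K \<pi> u (\<lambda>_. 1) = a" unfolding ipr_def a_def mn_def by simp
  have ipP1: "ipr K \<pi> (\<lambda>_. 1) (Pop K P (\<lambda>_. 1)) = 1" unfolding ipr_def using P1 pi_sum by simp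
  have Q1: "Qf (\<lambda>_. 1) = 0" unfolding ipr_def mn_def using P1 pi_sum by simp
  have mv: "mn K \<pi> v = 0" unfolding v_def mn_def a_def by (simp add: sum.distrib sum_distrib_right[symmetric] pi_sum algebra_simps sum_subtractf)
  have Qv: "Qf v = ipr K \<pi> u (Pop K P u) - a^2"
    unfolding v_def QN_expand ip1 ipu1 m1 ipP1 by (simp add: a_def power2_eq_square algebra_simps)
  have Nv: "N v = N u - a^2"
    unfolding v_def QN_expand iu1 N1 by (simp add: power2_eq_square algebra_simps)
  have "Qf v \<le> l * N v" unfolding l_def by (rule Q_le_lam0[OF K])
  then have "ipr K \<pi> u (Pop K P u) \<le> a^2 + l * (N u - a^2)" unfolding Qv Nv by simp
  then show ?thesis unfolding l_def[symmetric] a_def[symmetric] by (simp add: algebra_simps)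
qed

end


lemma labelings_0: "labelings 0 K = {\<lambda>_. undefined}"
  unfolding labelings_def by simp

lemma sum_lab_Suc:
  "(\<Sum>C\<in>labelings (Suc n) K. f C) = (\<Sum>C\<in>labelings n K. \<Sum>b<K. f (C(n := b)))"
proof -
  have e: "labelings (Suc n) K = (\<lambda>(y, g). g(n := y)) ` ({..<K} \<times> labelings n K)"
    unfolding labelings_def lessThan_Suc by (rule PiE_insert_eq)
  have i: "inj_on (\<lambda>(y, g). g(n := y)) ({..<K} \<times> labelings n K)"
    unfolding labelings_def by (rule inj_combinator) simp
  have "(\<Sum>C\<in>labelings (Suc n) K. f C) = (\<Sum>(y, g)\<in>{..<K} \<times> labelings n K. f (g(n := y)))"
    unfolding e by (subst sum.reindex[OF i]) (simp add: case_prod_unfold)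
  also have "\<dots> = (\<Sum>y<K. \<Sum>g\<in>labelings n K. f (g(n := y)))"
    by (rule sum.cartesian_product[symmetric])
  also have "\<dots> = (\<Sum>C\<in>labelings n K. \<Sum>b<K. f (C(n := b)))"
    by (rule sum.swap)
  finally show ?thesis .
qed

lemma mw_upd: "markov_weight P \<pi> (Suc (Suc m)) (C(Suc m := b)) = markov_weight P \<pi> (Suc m) C * P (C m) b"
proof -
  have "(\<Prod>i<Suc m. P ((C(Suc m := b)) i) ((C(Suc m := b)) (Suc i))) =
        (\<Prod>i<m. P (C i) (C (Suc i))) * P (C m) b"
    by (simp add: prod.lessThan_Suc)
  then show ?thesis unfolding markov_weight_def by simp
qed

lemma mw_one: "markov_weight P \<pi> (Suc 0) C = \<pi> (C 0)"
  unfolding markov_weight_def by simp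

fun fwd :: "nat \<Rightarrow> (nat \<Rightarrow> nat \<Rightarrow> real) \<Rightarrow> (nat \<Rightarrow> real) \<Rightarrow> (nat \<Rightarrow> real) \<Rightarrow> nat \<Rightarrow> nat \<Rightarrow> real" where
  "fwd K P \<pi> g 0 j = \<pi> j * g j"
| "fwd K P \<pi> g (Suc m) j = g j * (\<Sum>c<K. fwd K P \<pi> g m c * P c j)"

lemma path_sum:
  "(\<Sum>C\<in>labelings (Suc m) K. markov_weight P \<pi> (Suc m) C * (\<Prod>i<Suc m. g (C i)) * \<phi> (C m))
    = (\<Sum>j<K. fwd K P \<pi> g m j * \<phi> j)"
proof (induction m arbitrary: \<phi>)
  case 0
  show ?case unfolding sum_lab_Suc labelings_0 by (simp add: mw_one)
next
  case (Suc m)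
  define \<psi> where "\<psi> c = (\<Sum>b<K. P c b * g b * \<phi> b)" for c
  have "(\<Sum>C\<in>labelings (Suc (Suc m)) K. markov_weight P \<pi> (Suc (Suc m)) C * (\<Prod>i<Suc (Suc m). g (C i)) * \<phi> (C (Suc m)))
      = (\<Sum>C\<in>labelings (Suc m) K. markov_weight P \<pi> (Suc m) C * (\<Prod>i<Suc m. g (C i)) * \<psi> (C m))"
    unfolding sum_lab_Suc[where n="Suc m"]
  proof (rule sum.cong[OF refl])
    fix C
    have "(\<Prod>i<Suc (Suc m). g ((C(Suc m := b)) i)) = (\<Prod>i<Suc m. g (C i)) * g b" for b
      by (simp add: prod.lessThan_Suc del: prod.lessThan_Suc_shift)
    then show "(\<Sum>b<K. markov_weight P \<pi> (Suc (Suc m)) (C(Suc m := b)) * (\<Prod>i<Suc (Suc m). g ((C(Suc m := b)) i)) * \<phi> ((C(Suc m := b)) (Suc m)))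
      = markov_weight P \<pi> (Suc m) C * (\<Prod>i<Suc m. g (C i)) * \<psi> (C m)"
      unfolding mw_upd \<psi>_def by (simp add: sum_distrib_left mult_ac)
  qed
  also have "\<dots> = (\<Sum>c<K. fwd K P \<pi> g m c * \<psi> c)" by (rule Suc.IH)
  also have "\<dots> = (\<Sum>b<K. fwd K P \<pi> g (Suc m) b * \<phi> b)"
  proof -
    have "(\<Sum>c<K. fwd K P \<pi> g m c * \<psi> c) = (\<Sum>c<K. \<Sum>b<K. fwd K P \<pi> g m c * P c b * g b * \<phi> b)"
      unfolding \<psi>_def by (simp add: sum_distrib_left mult_ac)
    also have "\<dots> = (\<Sum>b<K. \<Sum>c<K. fwd K P \<pi> g m c * P c b * g b * \<phi> b)" by (rule sum.swap)
    also have "\<dots> = (\<Sum>b<K. fwd K P \<pi> g (Suc m) b * \<phi> b)"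
      by (simp add: sum_distrib_left sum_distrib_right mult_ac)
    finally show ?thesis .
  qed
  finally show ?case .
qed


lemma secular:
  fixes l b :: real
  assumes l: "0 \<le> l" "l < 1" and g: "\<forall>i<K. 0 < g i \<and> g i \<le> 1" and b: "b > l"
    and F: "(1 - l) * (\<Sum>i<K. \<pi> i * g i / (b - l * g i)) \<le> 1" and pi: "\<forall>i<K. \<pi> i > 0"
  shows "l * (\<Sum>i<K. \<pi> i * (sqrt (g i) * y i)^2) + (1 - l) * (\<Sum>i<K. \<pi> i * (sqrt (g i) * y i))^2
     \<le> b * (\<Sum>i<K. \<pi> i * (y i)^2)"
proof -
  define d where "d i = b - l * g i" for i
  have dpos: "d i > 0" if "i < K" for i
  proof -
    have "l * g i \<le> l * 1" using g that l by (intro mult_left_mono) auto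
    then show ?thesis unfolding d_def using b by simp
  qed
  have "(\<Sum>i<K. \<pi> i * (sqrt (g i) * y i))^2 =
      (\<Sum>i<K. sqrt (\<pi> i * g i / d i) * (sqrt (\<pi> i * d i) * y i))^2"
  proof -
    have "\<pi> i * (sqrt (g i) * y i) = sqrt (\<pi> i * g i / d i) * (sqrt (\<pi> i * d i) * y i)" if "i < K" for i
    proof -
      have "sqrt (\<pi> i * g i / d i) * sqrt (\<pi> i * d i) = sqrt (\<pi> i * \<pi> i * g i)"
        using dpos[OF that] by (simp add: real_sqrt_mult[symmetric] field_simps)
      also have "\<dots> = \<pi> i * sqrt (g i)" using pi that by (simp add: real_sqrt_mult abs_of_pos)
      finally show ?thesis by (metis mult.assoc)
    qed
    then show ?thesis by (metis (no_types, lifting) lessThan_iff sum.cong)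
  qed
  also have "\<dots> \<le> (\<Sum>i<K. (sqrt (\<pi> i * g i / d i))^2) * (\<Sum>i<K. (sqrt (\<pi> i * d i) * y i)^2)"
    by (rule Cauchy_Schwarz_ineq_sum)
  also have "\<dots> = (\<Sum>i<K. \<pi> i * g i / d i) * (\<Sum>i<K. \<pi> i * d i * (y i)^2)"
  proof -
    have "(\<Sum>i<K. (sqrt (\<pi> i * g i / d i))^2) = (\<Sum>i<K. \<pi> i * g i / d i)"
    proof (intro sum.cong refl)
      fix i assume "i \<in> {..<K}"
      then have "0 \<le> \<pi> i * g i / d i" using pi g dpos[of i] by (auto intro!: divide_nonneg_pos mult_nonneg_nonneg less_imp_le)
      then show "(sqrt (\<pi> i * g i / d i))^2 = \<pi> i * g i / d i" by simp
    qed
    moreover have "(\<Sum>i<K. (sqrt (\<pi> i * d i) * y i)^2) = (\<Sum>i<K. \<pi> i * d i * (y i)^2)"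
    proof (intro sum.cong refl)
      fix i assume "i \<in> {..<K}"
      then have "0 \<le> \<pi> i * d i" using pi dpos[of i] by auto
      then show "(sqrt (\<pi> i * d i) * y i)^2 = \<pi> i * d i * (y i)^2" by (simp add: power_mult_distrib)
    qed
    ultimately show ?thesis by simp
  qed
  finally have cs: "(\<Sum>i<K. \<pi> i * (sqrt (g i) * y i))^2 \<le> (\<Sum>i<K. \<pi> i * g i / d i) * (\<Sum>i<K. \<pi> i * d i * (y i)^2)" .
  have D: "(\<Sum>i<K. \<pi> i * d i * (y i)^2) \<ge> 0"
  proof (intro sum_nonneg)
    fix i assume "i \<in> {..<K}"
    then have "0 \<le> \<pi> i * d i" using pi dpos[of i] by auto
    then show "0 \<le> \<pi> i * d i * (y i)^2" by simp
  qed
  have "(1 - l) * (\<Sum>i<K. \<pi> i * (sqrt (g i) * y i))^2 \<le> (1 - l) * ((\<Sum>i<K. \<pi> i * g i / d i) * (\<Sum>i<K. \<pi> i * d i * (y i)^2))"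
    using cs l by (intro mult_left_mono) auto
  also have "\<dots> = ((1 - l) * (\<Sum>i<K. \<pi> i * g i / d i)) * (\<Sum>i<K. \<pi> i * d i * (y i)^2)" by simp
  also have "\<dots> \<le> 1 * (\<Sum>i<K. \<pi> i * d i * (y i)^2)"
    using F D unfolding d_def by (intro mult_right_mono) auto
  finally have 1: "(1 - l) * (\<Sum>i<K. \<pi> i * (sqrt (g i) * y i))^2 \<le> (\<Sum>i<K. \<pi> i * d i * (y i)^2)" by simp
  have 2: "(\<Sum>i<K. \<pi> i * d i * (y i)^2) = b * (\<Sum>i<K. \<pi> i * (y i)^2) - l * (\<Sum>i<K. \<pi> i * (sqrt (g i) * y i)^2)"
  proof -
    have "(\<Sum>i<K. \<pi> i * (sqrt (g i) * y i)^2) = (\<Sum>i<K. \<pi> i * g i * (y i)^2)"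
      using g by (intro sum.cong) (auto simp: power_mult_distrib)
    then show ?thesis unfolding d_def
      by (simp add: sum_distrib_left algebra_simps sum_subtractf)
  qed
  show ?thesis using 1 2 by linarith
qed

lemma sum_if_one:
  fixes A B :: "nat \<Rightarrow> real"
  assumes "k < K"
  shows "(\<Sum>i<K. if i = k then A i else B i) = A k + (\<Sum>i<K. B i) - B k"
proof -
  have "(\<Sum>i<K. if i = k then A i else B i) = (if k = k then A k else B k) + (\<Sum>i\<in>{..<K} - {k}. if i = k then A i else B i)"
    using assms by (subst sum.remove[of _ k]) auto
  also have "(\<Sum>i\<in>{..<K} - {k}. if i = k then A i else B i) = (\<Sum>i\<in>{..<K} - {k}. B i)"
    by (rule sum.cong) auto
  also have "\<dots> = (\<Sum>i<K. B i) - B k" using assms by (simp add: sum_diff1)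
  finally show ?thesis by simp
qed

context mchain begin

lemma mw_nonneg: assumes "C \<in> labelings n K" shows "markov_weight P \<pi> n C \<ge> 0"
proof (cases "n = 0")
  case True then show ?thesis by (simp add: markov_weight_def)
next
  case False
  have C: "\<forall>i<n. C i < K" using assms unfolding labelings_def by auto
  have "\<pi> (C 0) \<ge> 0" using C False pi_pos by (simp add: less_imp_le)
  moreover have "(\<Prod>i<n - 1. P (C i) (C (Suc i))) \<ge> 0"
    using C P_nonneg by (intro prod_nonneg) auto
  ultimately show ?thesis unfolding markov_weight_def using False by simp
qed

lemma conc:
  assumes K: "K > 0" and k: "k < K" and n: "n > 0"
    and th: "\<theta> > 0" and l_def: "l = max (lambda_plus K P \<pi>) 0" and l1: "l < 1" and b: "b > l"
    and F: "(1 - l) * (\<pi> k * exp (-\<theta>) / (b - l * exp (-\<theta>)) + (1 - \<pi> k) / (b - l)) \<le> 1"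
    and hb: "1 - \<pi> k + \<pi> k * exp (-\<theta>) \<le> b"
  shows "(\<Sum>C\<in>{C\<in>labelings n K. real (card (community n C k)) < x}. markov_weight P \<pi> n C) \<le> exp (\<theta> * x) * b^n"
proof -
  define a where "a = exp (-\<theta>)"
  define g where "g c = (if c = k then a else 1)" for c
  define \<gamma> where "\<gamma> c = sqrt (g c)" for c
  define t where "t j c = \<pi> c * \<gamma> c * P c j * \<gamma> j / \<pi> j" for j c
  obtain m where m: "n = Suc m" using n by (cases n) auto
  have a: "0 < a" "a \<le> 1" unfolding a_def using th by auto
  have gpos: "\<forall>i<K. 0 < g i \<and> g i \<le> 1" unfolding g_def using a by auto
  have l0: "0 \<le> l" unfolding l_def by simp
  have b0: "b > 0" using b l0 by simp
  have fin: "finite (labelings n K)" unfolding labelings_def by (simp add: finite_PiE)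
  have prodg: "(\<Prod>i<n. g (C i)) = exp (- \<theta> * real (card (community n C k)))" for C
  proof -
    have "(\<Prod>i<n. g (C i)) = (\<Prod>i\<in>{..<n}. if C i = k then a else 1)" unfolding g_def ..
    also have "\<dots> = (\<Prod>i\<in>{..<n} \<inter> {i. C i = k}. a) * (\<Prod>i\<in>{..<n} \<inter> - {i. C i = k}. 1)"
      by (rule prod.If_cases) simp
    also have "\<dots> = a ^ card (community n C k)"
    proof -
      have "{..<n} \<inter> {i. C i = k} = community n C k" unfolding community_def by auto
      then show ?thesis by simp
    qed
    also have "\<dots> = exp (- \<theta> * real (card (community n C k)))"
      unfolding a_def by (simp add: exp_of_nat_mult[symmetric] mult.commute)
    finally show ?thesis .
  qed
  have "(\<Sum>C\<in>{C\<in>labelings n K. real (card (community n C k)) < x}. markov_weight P \<pi> n C)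
     \<le> (\<Sum>C\<in>{C\<in>labelings n K. real (card (community n C k)) < x}. markov_weight P \<pi> n C * exp (\<theta> * x) * (\<Prod>i<n. g (C i)))"
  proof (rule sum_mono)
    fix C assume C: "C \<in> {C\<in>labelings n K. real (card (community n C k)) < x}"
    have "exp (\<theta> * x) * (\<Prod>i<n. g (C i)) = exp (\<theta> * (x - real (card (community n C k))))"
      unfolding prodg by (simp add: exp_add[symmetric] algebra_simps)
    also have "\<dots> \<ge> 1" using C th by auto
    finally have "1 \<le> exp (\<theta> * x) * (\<Prod>i<n. g (C i))" .
    then show "markov_weight P \<pi> n C \<le> markov_weight P \<pi> n C * exp (\<theta> * x) * (\<Prod>i<n. g (C i))"
      using mw_nonneg[of C n] C by (simp add: mult.assoc mult_le_cancel_left1)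
  qed
  also have "\<dots> \<le> (\<Sum>C\<in>labelings n K. markov_weight P \<pi> n C * exp (\<theta> * x) * (\<Prod>i<n. g (C i)))"
  proof (rule sum_mono2[OF fin])
    show "{C \<in> labelings n K. real (card (community n C k)) < x} \<subseteq> labelings n K" by auto
    fix C assume "C \<in> labelings n K - {C \<in> labelings n K. real (card (community n C k)) < x}"
    then show "0 \<le> markov_weight P \<pi> n C * exp (\<theta> * x) * (\<Prod>i<n. g (C i))"
    proof -
      have "0 \<le> (\<Prod>i<n. g (C i))" using a by (intro prod_nonneg) (auto simp: g_def)
      moreover have "0 \<le> markov_weight P \<pi> n C" using mw_nonneg[of C n] \<open>C \<in> _\<close> by auto
      ultimately show ?thesis by simp
    qed
  qed
  also have "\<dots> = exp (\<theta> * x) * (\<Sum>C\<in>labelings n K. markov_weight P \<pi> n C * (\<Prod>i<n. g (C i)) * 1)"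
    by (simp add: sum_distrib_left mult_ac)
  also have "(\<Sum>C\<in>labelings n K. markov_weight P \<pi> n C * (\<Prod>i<n. g (C i)) * 1) = (\<Sum>j<K. fwd K P \<pi> g m j * 1)"
    unfolding m by (rule path_sum)
  also have "\<dots> \<le> b^m * b"
  proof -
    have fw: "fwd K P \<pi> g mm j = \<pi> j * \<gamma> j * (Tr K t ^^ mm) \<gamma> j" if "j < K" for mm j
      using that
    proof (induction mm arbitrary: j)
      case 0
      then have "g j > 0" using gpos by auto
      then show ?case unfolding \<gamma>_def by (simp add: mult.assoc abs_of_pos)
    next
      case (Suc mm)
      have pj: "\<pi> j \<noteq> 0" using pi_pos Suc.prems by auto
      have "fwd K P \<pi> g (Suc mm) j = g j * (\<Sum>c<K. \<pi> c * \<gamma> c * (Tr K t ^^ mm) \<gamma> c * P c j)"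
        using Suc.IH by simp
      also have "\<dots> = \<pi> j * \<gamma> j * (\<Sum>c<K. t j c * (Tr K t ^^ mm) \<gamma> c)"
      proof -
        have "g j > 0" using gpos Suc.prems by auto
        then have gj: "g j = \<gamma> j * \<gamma> j" unfolding \<gamma>_def by (simp add: abs_of_pos)
        show ?thesis unfolding gj t_def sum_distrib_left using pj by (intro sum.cong refl) (simp add: field_simps)
      qed
      also have "\<dots> = \<pi> j * \<gamma> j * (Tr K t ^^ Suc mm) \<gamma> j" by (simp add: Tr_def)
      finally show ?case .
    qed
    have tnn: "\<forall>i<K. \<forall>j<K. t i j \<ge> 0"
    proof (intro allI impI)
      fix i j assume ij: "i < K" "j < K"
      have "0 \<le> \<pi> j * \<gamma> j * P j i * \<gamma> i" unfolding \<gamma>_def using pi_pos P_nonneg ij gpos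
        by (intro mult_nonneg_nonneg) (auto simp: less_imp_le)
      moreover have "\<pi> i > 0" using pi_pos ij by auto
      ultimately show "t i j \<ge> 0" unfolding t_def by (rule divide_nonneg_pos)
    qed
    have H: "\<forall>y. (\<forall>i<K. y i \<ge> 0) \<longrightarrow> (\<Sum>i<K. \<pi> i * y i * (\<Sum>j<K. t i j * y j)) \<le> b * (\<Sum>i<K. \<pi> i * (y i)^2)"
    proof (intro allI impI)
      fix y :: "nat \<Rightarrow> real"
      define u where "u i = \<gamma> i * y i" for i
      have "(\<Sum>i<K. \<pi> i * y i * (\<Sum>j<K. t i j * y j)) = (\<Sum>i<K. \<Sum>c<K. \<pi> c * u c * P c i * u i)"
        unfolding t_def u_def sum_distrib_left using pi_pos by (intro sum.cong refl) (auto simp: field_simps)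
      also have "\<dots> = (\<Sum>c<K. \<Sum>i<K. \<pi> c * u c * P c i * u i)" by (rule sum.swap)
      also have "\<dots> = ipr K \<pi> u (Pop K P u)" unfolding ipr_def Pop_def by (simp add: sum_distrib_left mult_ac)
      also have "\<dots> \<le> l * ipr K \<pi> u u + (1 - l) * (mn K \<pi> u)^2"
        unfolding l_def by (rule quad_lambda[OF K])
      also have "\<dots> = l * (\<Sum>i<K. \<pi> i * (sqrt (g i) * y i)^2) + (1 - l) * (\<Sum>i<K. \<pi> i * (sqrt (g i) * y i))^2"
        unfolding ipr_def mn_def u_def \<gamma>_def by (simp add: power2_eq_square mult_ac)
      also have "\<dots> \<le> b * (\<Sum>i<K. \<pi> i * (y i)^2)"
      proof (rule secular[OF l0 l1 gpos b _ pi_pos])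
        have "(\<Sum>i<K. \<pi> i * g i / (b - l * g i)) = (\<Sum>i<K. if i = k then \<pi> i * a / (b - l * a) else \<pi> i / (b - l))"
          unfolding g_def by (intro sum.cong refl) auto
        also have "\<dots> = \<pi> k * a / (b - l * a) + (1 - \<pi> k) / (b - l)"
          unfolding sum_if_one[OF k] using pi_sum by (simp add: sum_divide_distrib[symmetric] diff_divide_distrib)
        finally show "(1 - l) * (\<Sum>i<K. \<pi> i * g i / (b - l * g i)) \<le> 1" using F unfolding a_def by simp
      qed
      finally show "(\<Sum>i<K. \<pi> i * y i * (\<Sum>j<K. t i j * y j)) \<le> b * (\<Sum>i<K. \<pi> i * (y i)^2)" .
    qed
    have "(\<Sum>j<K. fwd K P \<pi> g m j * 1) = (\<Sum>j<K. \<pi> j * \<gamma> j * (Tr K t ^^ m) \<gamma> j)"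
      using fw by simp
    also have "\<dots> \<le> b^m * (\<Sum>j<K. \<pi> j * (\<gamma> j)^2)"
      by (rule power_ineq[OF pi_pos tnn b0 H])
    also have "(\<Sum>j<K. \<pi> j * (\<gamma> j)^2) = (\<Sum>j<K. if j = k then \<pi> j * a else \<pi> j)"
      unfolding \<gamma>_def g_def using a by (intro sum.cong refl) auto
    also have "\<dots> = 1 - \<pi> k + \<pi> k * a" unfolding sum_if_one[OF k] using pi_sum by simp
    also have "b^m * \<dots> \<le> b^m * b" using hb b0 unfolding a_def by (intro mult_left_mono) auto
    finally show ?thesis .
  qed
  finally have "(\<Sum>C\<in>{C\<in>labelings n K. real (card (community n C k)) < x}. markov_weight P \<pi> n C)
      \<le> exp (\<theta> * x) * (b ^ m * b)" by (simp add: mult_left_mono)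
  then show ?thesis using m by (simp add: mult.commute)
qed

end


lemma finite_pairs: "finite (pairs n)"
proof -
  have "pairs n \<subseteq> {..<n} \<times> {..<n}" unfolding pairs_def by auto
  then show ?thesis by (rule finite_subset) simp
qed

lemma sbm_weight_nonneg:
  assumes "\<forall>i<n. \<forall>j<n. 0 \<le> Q (C i) (C j) \<and> Q (C i) (C j) \<le> 1"
  shows "sbm_weight Q n C E \<ge> 0"
  unfolding sbm_weight_def using assms by (intro prod_nonneg) (auto simp: pairs_def)

lemma sbm_total:
  "(\<Sum>E\<in>graphs n. sbm_weight Q n C E) = 1"
proof -
  define f where "f x = Q (C (fst x)) (C (snd x))" for x
  have "(\<Sum>E\<in>graphs n. sbm_weight Q n C E) = (\<Sum>E\<in>Pow (pairs n). (\<Prod>x\<in>E. f x) * (\<Prod>x\<in>pairs n - E. 1 - f x))"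
  proof (rule sum.cong)
    show "graphs n = Pow (pairs n)" unfolding graphs_def ..
    fix E assume E: "E \<in> Pow (pairs n)"
    have "sbm_weight Q n C E = (\<Prod>x\<in>pairs n. if x \<in> E then f x else 1 - f x)"
      unfolding sbm_weight_def f_def by (intro prod.cong) auto
    also have "\<dots> = (\<Prod>x\<in>pairs n \<inter> {x. x \<in> E}. f x) * (\<Prod>x\<in>pairs n \<inter> - {x. x \<in> E}. 1 - f x)"
      by (rule prod.If_cases[OF finite_pairs])
    also have "\<dots> = (\<Prod>x\<in>pairs n \<inter> E. f x) * (\<Prod>x\<in>pairs n \<inter> - E. 1 - f x)" by simp
    also have "pairs n \<inter> E = E" using E by auto
    also have "pairs n \<inter> - E = pairs n - E" by auto
    finally show "sbm_weight Q n C E = (\<Prod>x\<in>E. f x) * (\<Prod>x\<in>pairs n - E. 1 - f x)" .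
  qed
  also have "\<dots> = (\<Prod>x\<in>pairs n. f x + (1 - f x))" by (rule prod_add[symmetric, OF finite_pairs])
  also have "\<dots> = 1" by simp
  finally show ?thesis .
qed

lemma sbm_prob_le1:
  assumes "\<forall>i<n. \<forall>j<n. 0 \<le> Q (C i) (C j) \<and> Q (C i) (C j) \<le> 1"
  shows "sbm_prob Q n C A \<le> 1"
proof -
  have "sbm_prob Q n C A \<le> (\<Sum>E\<in>graphs n. sbm_weight Q n C E)"
    unfolding sbm_prob_def graphs_def using sbm_weight_nonneg[where Q=Q and n=n and C=C, OF assms] finite_pairs
    by (intro sum_mono2) auto
  then show ?thesis using sbm_total by simp
qed

lemma sbm_prob_nonneg:
  assumes "\<forall>i<n. \<forall>j<n. 0 \<le> Q (C i) (C j) \<and> Q (C i) (C j) \<le> 1"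
  shows "sbm_prob Q n C A \<ge> 0"
  unfolding sbm_prob_def using sbm_weight_nonneg[where Q=Q and n=n and C=C, OF assms] by (intro sum_nonneg) auto

lemma sbm_prob_mono:
  assumes "\<forall>i<n. \<forall>j<n. 0 \<le> Q (C i) (C j) \<and> Q (C i) (C j) \<le> 1" and "\<And>E. A E \<Longrightarrow> B E"
  shows "sbm_prob Q n C A \<le> sbm_prob Q n C B"
  unfolding sbm_prob_def graphs_def using sbm_weight_nonneg[where Q=Q and n=n and C=C, OF assms(1)] finite_pairs assms(2)
  by (intro sum_mono2) auto

context mchain begin

lemma fwd_one: "j < K \<Longrightarrow> fwd K P \<pi> (\<lambda>_. 1) m j = \<pi> j"
proof (induction m arbitrary: j)
  case 0 then show ?case by simp
next
  case (Suc m)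
  have "fwd K P \<pi> (\<lambda>_. 1) (Suc m) j = (\<Sum>c<K. \<pi> c * P c j)" using Suc.IH by simp
  then show ?case using pi_stat Suc.prems by simp
qed

lemma mw_total: assumes "n > 0" shows "(\<Sum>C\<in>labelings n K. markov_weight P \<pi> n C) = 1"
proof -
  obtain m where m: "n = Suc m" using assms by (cases n) auto
  have "(\<Sum>C\<in>labelings n K. markov_weight P \<pi> n C) =
      (\<Sum>C\<in>labelings (Suc m) K. markov_weight P \<pi> (Suc m) C * (\<Prod>i<Suc m. (\<lambda>_. 1::real) (C i)) * (\<lambda>_. 1) (C m))"
    unfolding m by simp
  also have "\<dots> = (\<Sum>j<K. fwd K P \<pi> (\<lambda>_. 1) m j * 1)" by (rule path_sum)
  also have "\<dots> = 1" using fwd_one pi_sum by simp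
  finally show ?thesis .
qed

end


lemma ln_one_minus_le2:
  fixes x :: real assumes "0 \<le> x" "x < 1"
  shows "ln (1 - x) \<le> - x - x^2/2"
proof -
  define f where "f y = ln (1 - y) + y + y^2/2" for y :: real
  have "f x \<le> f 0"
  proof (rule DERIV_nonpos_imp_decreasing_open[OF assms(1)])
    fix y assume y: "0 < y" "y < x"
    then have y1: "1 - y > 0" using assms by simp
    have "(f has_real_derivative (- 1 / (1 - y) + 1 + y)) (at y)"
      unfolding f_def using y1 by (auto intro!: derivative_eq_intros simp: field_simps)
    moreover have "- 1 / (1 - y) + 1 + y = - (y^2) / (1 - y)" using y1 by (simp add: field_simps power2_eq_square)
    moreover have "- (y^2) / (1 - y) \<le> 0" using y1 by simp
    ultimately show "\<exists>z. DERIV f y :> z \<and> z \<le> 0" by auto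
  next
    show "continuous_on {0..x} f" unfolding f_def using assms
      by (intro continuous_intros) auto
  qed
  then show ?thesis unfolding f_def by simp
qed

lemma ln2_le: "ln (2::real) \<le> 7/10"
proof -
  have "1 + 7/40 + (7/40)^2/2 \<le> exp (7/40::real)" by (rule exp_lower_Taylor_quadratic) simp
  then have A: "(1 + 7/40 + (7/40)^2/2)^4 \<le> exp (7/40::real) ^ 4" by (intro power_mono) auto
  have B: "exp (7/40::real) ^ 4 = exp (7/10)" by (simp add: exp_of_nat_mult[symmetric])
  have C: "(2::real) \<le> (1 + 7/40 + (7/40)^2/2)^4" by (simp add: power_divide)
  have "2 \<le> exp (7/10::real)" using A B C by linarith
  then have "ln 2 \<le> ln (exp (7/10::real))" by (subst ln_le_cancel_iff) auto
  then show ?thesis by simp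
qed

lemma ana_i:
  fixes q p :: real
  assumes q: "0 < q" "q \<le> 1/2" and p: "q \<le> p" "p \<le> 1"
  shows "\<exists>\<theta> b. \<theta> > 0 \<and> b > 0 \<and> (1 - 0) * (p * exp (-\<theta>) / (b - 0 * exp (-\<theta>)) + (1 - p) / (b - 0)) \<le> 1
     \<and> 1 - p + p * exp (-\<theta>) \<le> b \<and> \<theta> * q / 2 + ln b \<le> - (q^2 / (2 * 1 + 4 * (1/3) * q))"
proof (intro exI conjI)
  define b where "b = 1 - p / 2"
  have b0: "b > 0" unfolding b_def using p by simp
  have e: "exp (- ln 2) = (1/2::real)" by (simp add: exp_minus)
  show "ln 2 > (0::real)" by simp
  show "b > 0" by (rule b0)
  show "(1 - 0) * (p * exp (- ln 2) / (b - 0 * exp (- ln 2)) + (1 - p) / (b - 0)) \<le> 1"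
    unfolding e using b0 by (simp add: b_def field_simps)
  show "1 - p + p * exp (- ln 2) \<le> b" unfolding e b_def by simp
  have "ln b \<le> ln (1 - q/2)" unfolding b_def using p q by (subst ln_le_cancel_iff) auto
  also have "\<dots> \<le> - (q/2) - (q/2)^2/2" using q by (intro ln_one_minus_le2) auto
  finally have 1: "ln b \<le> - (q/2) - (q/2)^2/2" .
  have 2: "ln 2 * q / 2 \<le> 7/10 * q / 2" using ln2_le q by (intro divide_right_mono mult_right_mono) auto
  define L where "L = 7/10 * q / 2 - (q/2) - (q/2)^2/2"
  define D where "D = 2 * 1 + 4 * (1/3) * q"
  define W where "W = 9/10 - 33/20 * q + q^2/2"
  define E where "E = - (q^2 / D)"
  have d: "D > 0" unfolding D_def using q by simp
  have W: "W \<ge> 0" unfolding W_def using q by (simp add: add_nonneg_nonneg)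
  have LD: "L * D + q^2 = - ((q/3) * W)"
    unfolding L_def D_def W_def by (simp add: algebra_simps power2_eq_square power3_eq_cube)
  have nn: "(q/3) * W \<ge> 0" using W q by simp
  have "L * D = - ((q/3) * W) - q^2" using LD by (simp only: eq_diff_eq)
  also have "\<dots> \<le> - (q^2)" using nn by simp
  finally have "L * D \<le> - (q^2)" .
  then have "L \<le> (- (q^2)) / D" by (subst pos_le_divide_eq[OF d])
  then have 3: "L \<le> E" unfolding E_def by (simp only: minus_divide_left)
  have "ln 2 * q / 2 + ln b \<le> E" using 1 2 3 unfolding L_def by linarith
  then show "ln 2 * q / 2 + ln b \<le> - (q^2 / (2 * 1 + 4 * (1/3) * q))" unfolding E_def D_def .
qed


lemma poly_D:
  fixes q e :: real
  assumes q: "0 < q" "q \<le> 1/2" and e: "0 < e" "e \<le> 1"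
  shows "16 - 12*e + 104*q - 42*q*e + 18*q*e^2 + 124*q^2 - 114*q^2*e - 228*q^3*e + 18*q^3*e^2 \<ge> 0"
proof -
  have a1: "q*e \<le> q" using q e by (simp add: mult_left_le)
  have a2: "q^2*e \<le> q^2" using q e by (simp add: mult_left_le)
  have a3: "q^3*e \<le> q^3" using q e by (simp add: mult_left_le)
  have a4: "q^3 \<le> q^2/2" using q by (simp add: power3_eq_cube power2_eq_square mult_left_le)
  have a5: "q^2 \<le> q/2" using q by (simp add: power2_eq_square mult_left_le)
  have a6: "q*e^2 \<ge> 0" "q^3*e^2 \<ge> 0" using q e by auto
  show ?thesis using a1 a2 a3 a4 a5 a6 e q by linarith
qed

lemma ana_ii:
  fixes q p l :: real
  assumes q: "0 < q" "q \<le> 1/2" and p: "q \<le> p" "p \<le> 1" and l: "0 < l" "l < 1"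
  shows "\<exists>\<theta> b. \<theta> > 0 \<and> b > l \<and> (1 - l) * (p * exp (-\<theta>) / (b - l * exp (-\<theta>)) + (1 - p) / (b - l)) \<le> 1
     \<and> 1 - p + p * exp (-\<theta>) \<le> b
     \<and> \<theta> * q / 2 + ln b \<le> - (q^2 / (2 * ((1 + l) / (1 - l)) + 4 * (5 / (1 - l)) * q))"
proof -
  define e where "e = 1 - l"
  have e: "0 < e" "e < 1" unfolding e_def using l by auto
  have le: "l = 1 - e" unfolding e_def by simp
  define u where "u = 3*q*e/(2+8*q)"
  have u0: "u > 0" unfolding u_def using q e by simp
  have ue: "u < e"
  proof -
    have "e*(2+8*q) - 3*q*e = e*(2 + 5*q)" by (simp add: algebra_simps)
    moreover have "e*(2 + 5*q) > 0" using q e by simp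
    ultimately have "3*q*e < e*(2+8*q)" by linarith
    then show ?thesis unfolding u_def using q by (simp add: divide_less_eq)
  qed
  have u1: "u < 1" using ue e by simp
  define a where "a = 1 - u"
  have a: "0 < a" "a < 1" unfolding a_def using u0 u1 by auto
  define \<theta> where "\<theta> = - ln a"
  have ea: "exp (-\<theta>) = a" unfolding \<theta>_def using a by simp
  have th: "\<theta> > 0" unfolding \<theta>_def using a by simp
  define D where "D = e + u*(l + e*p)"
  have De: "D \<ge> e" unfolding D_def using u0 l e p q by (simp add: add_nonneg_nonneg)
  have D0: "D > 0" using De e by simp
  define \<delta> where "\<delta> = e*p*u/D"
  have dD: "\<delta> * D = e*p*u" unfolding \<delta>_def using D0 by simp
  have d0: "\<delta> \<ge> 0" unfolding \<delta>_def using e p q u0 D0 by simp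
  have dpu: "\<delta> \<le> p*u"
  proof -
    have "e*(p*u) \<le> D*(p*u)" using De p q u0 by (intro mult_right_mono) auto
    then have "e*p*u \<le> D*(p*u)" by (simp add: mult.assoc)
    then show ?thesis unfolding \<delta>_def using D0 by (simp add: divide_le_eq mult.commute)
  qed
  have de: "\<delta> < e"
  proof -
    have "p*u \<le> u" using p u0 by (simp add: mult_left_le_one_le)
    then show ?thesis using dpu ue by linarith
  qed
  define b where "b = 1 - \<delta>"
  have bl: "b > l" unfolding b_def le using de by simp
  have b0: "b > 0" using bl l by simp
  have bl1: "b - l = e - \<delta>" unfolding b_def le by simp
  have bl2: "b - l * a = e - \<delta> + l*u" unfolding b_def le a_def by (simp add: algebra_simps)
  have pos1: "e - \<delta> > 0" using de by simp
  have pos2: "e - \<delta> + l*u > 0" using de l u0 by (simp add: add_pos_nonneg)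
  have F: "(1 - l) * (p * a / (b - l * a) + (1 - p) / (b - l)) \<le> 1"
  proof -
    have id: "(e - \<delta> + l*u) * (e - \<delta>) - e * (p*a*(e - \<delta>) + (1-p)*(e - \<delta> + l*u)) = \<delta>^2 - \<delta>*D + e*p*u"
      unfolding D_def a_def le by (simp add: algebra_simps power2_eq_square)
    have "e * (p*a*(e - \<delta>) + (1-p)*(e - \<delta> + l*u)) \<le> (e - \<delta> + l*u) * (e - \<delta>)"
      using id dD by (simp add: algebra_simps) 
    then have "e * (p*a*(e - \<delta>) + (1-p)*(e - \<delta> + l*u)) / ((e - \<delta> + l*u) * (e - \<delta>)) \<le> 1"
      using pos1 pos2 by (simp add: divide_le_eq)
    moreover have "e * (p*a*(e - \<delta>) + (1-p)*(e - \<delta> + l*u)) / ((e - \<delta> + l*u) * (e - \<delta>)) =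
        e * (p * a / (e - \<delta> + l*u) + (1 - p) / (e - \<delta>))"
      using pos1 pos2 by (simp add: field_simps)
    ultimately show ?thesis unfolding bl1 bl2 e_def[symmetric] by simp
  qed
  have hb: "1 - p + p * a \<le> b" unfolding a_def b_def using dpu by (simp add: algebra_simps)
  have t1: "\<theta> \<le> u/(1-u)"
  proof -
    have "ln (1/a) \<le> 1/a - 1" using a by (intro ln_le_minus_one) simp
    moreover have "ln (1/a) = \<theta>" unfolding \<theta>_def using a by (simp add: ln_div)
    moreover have "1/a - 1 = u/(1-u)" unfolding a_def using u1 by (simp add: field_simps)
    ultimately show ?thesis by simp
  qed
  have t2: "ln b \<le> - \<delta>" using ln_le_minus_one[OF b0] unfolding b_def by simp
  define dq where "dq = e*q*u/(e + u*(l + e*q))"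
  have dq: "dq \<le> \<delta>"
  proof -
    have p1: "e + u*(l + e*q) > 0" using e u0 l q by (simp add: add_pos_nonneg)
    have "e*q*u * D \<le> e*p*u * (e + u*(l + e*q))"
    proof -
      have "e*p*u * (e + u*(l + e*q)) - e*q*u * D = e*u*(p - q)*(e + u*l)"
        unfolding D_def by (simp add: algebra_simps)
      moreover have "e*u*(p - q)*(e + u*l) \<ge> 0" using e u0 p l by simp
      ultimately show ?thesis by linarith
    qed
    then show ?thesis unfolding dq_def \<delta>_def using p1 D0 by (simp add: divide_le_eq le_divide_eq mult.commute mult.left_commute)
  qed
  define X where "X = 2+8*q-3*q*e"
  define Y where "Y = 4-2*e+20*q"
  define Z where "Z = 2+11*q-3*q*e+3*e*q^2"
  have X0: "X > 0" unfolding X_def using q e by (simp add: algebra_simps) (smt (verit) mult_left_le_one_le)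
  have Y0: "Y > 0" unfolding Y_def using q e by simp
  have Z0: "Z > 0" unfolding Z_def using q e by (simp add: algebra_simps) (smt (verit) mult_left_le_one_le mult_nonneg_nonneg zero_le_power2)
  have r1: "u/(1-u) = 3*q*e/X"
  proof -
    have w: "2+8*q > 0" using q by simp
    have "1 - u = X/(2+8*q)" unfolding u_def X_def using w by (simp add: field_simps)
    then have "u/(1-u) = (3*q*e/(2+8*q)) / (X/(2+8*q))" unfolding u_def by simp
    also have "\<dots> = 3*q*e/X"
    proof -
      have "(x/c)/(y/c) = x/(y::real)" if "c \<noteq> 0" for x y c
        using that by (cases "y = 0") (simp_all add: field_simps)
      then show ?thesis using w by simp
    qed
    finally show ?thesis .
  qed
  have r2: "dq = 3*q^2*e/Z"
  proof -
    have w: "2+8*q \<noteq> 0" using q by simp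
    have n: "e*q*u = (3*q^2*e^2)/(2+8*q)" unfolding u_def using w by (simp add: power2_eq_square field_simps)
    have d: "e + u*(l + e*q) = (e*Z)/(2+8*q)" unfolding u_def Z_def le using w
      by (simp add: field_simps power2_eq_square)
    have c: "(x/c)/(y/c) = x/(y::real)" if "c \<noteq> 0" for x y c
      using that by (cases "y = 0") (simp_all add: field_simps)
    have "dq = (3*q^2*e^2)/(e*Z)" unfolding dq_def n d by (rule c[OF w])
    also have "\<dots> = 3*q^2*e/Z" using e by (simp add: power2_eq_square)
    finally show ?thesis .
  qed
  have r3: "q^2 / (2 * ((1 + l) / (1 - l)) + 4 * (5 / (1 - l)) * q) = q^2*e/Y"
    unfolding Y_def le using e by (simp add: field_simps)
  have key: "3/(2*X) + 1/Y \<le> 3/Z"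
  proof -
    have "6*X*Y - 3*Y*Z - 2*X*Z = 16 - 12*e + 104*q - 42*q*e + 18*q*e^2 + 124*q^2 - 114*q^2*e - 228*q^3*e + 18*q^3*e^2"
      unfolding X_def Y_def Z_def by (simp add: algebra_simps power2_eq_square power3_eq_cube)
    then have "3*Y*Z + 2*X*Z \<le> 6*X*Y" using poly_D[OF q, of e] e by linarith
    then show ?thesis using X0 Y0 Z0 by (simp add: field_simps)
  qed
  have "\<theta> * q / 2 + ln b \<le> (u/(1-u)) * q / 2 - dq"
    using t1 t2 dq q by (smt (verit) mult_right_mono divide_right_mono)
  also have "\<dots> = q^2*e * (3/(2*X)) - q^2*e*(3/Z)" unfolding r1 r2 by (simp add: field_simps power2_eq_square)
  also have "\<dots> \<le> - (q^2*e/Y)"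
  proof -
    have "q^2*e*(3/(2*X)) + q^2*e*(1/Y) \<le> q^2*e*(3/Z)"
      using key q e by (simp only: distrib_left[symmetric]) (intro mult_left_mono; simp)
    then show ?thesis by simp
  qed
  finally have fin: "\<theta> * q / 2 + ln b \<le> - (q^2 / (2 * ((1 + l) / (1 - l)) + 4 * (5 / (1 - l)) * q))"
    unfolding r3 .
  show ?thesis using th bl F hb fin ea by (intro exI[of _ \<theta>] exI[of _ b]) simp
qed


lemma finite_pat: "finite {f k j | k j. k < (K::nat) \<and> j < K \<and> R k j}"
  by (rule finite_subset[of _ "(\<lambda>(k,j). f k j) ` ({..<K} \<times> {..<K})"]) auto

lemma finite_pat2: "finite {f k j | k j. k < (K::nat) \<and> j < K}"
  by (rule finite_subset[of _ "(\<lambda>(k,j). f k j) ` ({..<K} \<times> {..<K})"]) auto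

theorem lemma1:
  fixes K n :: nat and P Q0 :: "nat \<Rightarrow> nat \<Rightarrow> real" and \<pi> :: "nat \<Rightarrow> real"
    and \<alpha> c c' c'' :: real and alg :: "(nat \<times> nat) set \<Rightarrow> nat \<Rightarrow> nat"
  assumes K2: "K \<ge> 2"
    and P_nonneg: "\<forall>i<K. \<forall>j<K. P i j \<ge> 0"
    and P_stoch: "\<forall>i<K. (\<Sum>j<K. P i j) = 1"
    and P_irred: "\<forall>i<K. \<forall>j<K. \<exists>m>0. mpow K P m i j > 0"
    and pi_pos: "\<forall>i<K. \<pi> i > 0"
    and pi_sum: "(\<Sum>i<K. \<pi> i) = 1"
    and pi_stat: "\<forall>j<K. (\<Sum>i<K. \<pi> i * P i j) = \<pi> j"
    and Q0_range: "\<forall>k<K. \<forall>l<K. 0 \<le> Q0 k l \<and> Q0 k l \<le> 1"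
    and Q0_sym: "\<forall>k<K. \<forall>l<K. Q0 k l = Q0 l k"
    and D_pos: "Dsq K Q0 > 0"
    and alpha: "0 < \<alpha>" "\<alpha> < 1"
    and c_pos: "c > 0" "c' > 0" "c'' > 0"
    and GV: "GV_guarantee alg n K \<alpha> Q0 (Lmax K Q0) c c' c''"
    and cond1: "\<alpha> * ln (real n) \<le> 1 / Lmax K Q0"
    and cond2: "real n * \<alpha> > max (4 * Lmax K Q0 * c'' / ((pi_min K \<pi>)^2 * Dsq K Q0))
                                  (2 / (Lmax K Q0 * pi_min K \<pi>))"
  shows "msbm_prob K P \<pi> (\<lambda>k l. \<alpha> * Q0 k l) n
           (\<lambda>C E. err n K (alg E) C >
                  exp (- c' * (real n * \<alpha> * pi_min K \<pi> * Dsq K Q0 / Lmax K Q0) / 2))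
         \<le> c / (real n)^2 + 2 * real K * exp (- real n * (pi_min K \<pi>)^2 /
              (2 * A1 (lambda_plus K P \<pi>) + 4 * A2 (lambda_plus K P \<pi>) * pi_min K \<pi>))"
proof -
  interpret mchain K P \<pi> using P_nonneg P_stoch pi_pos pi_sum pi_stat by unfold_locales
  define q where "q = pi_min K \<pi>"
  define L where "L = Lmax K Q0"
  define D2 where "D2 = Dsq K Q0"
  define lam where "lam = lambda_plus K P \<pi>"
  define Q where "Q = (\<lambda>k l. \<alpha> * Q0 k l)"
  define den where "den = 2 * A1 lam + 4 * A2 lam * q"
  have K0: "K > 0" using K2 by simp
  have qin: "q \<in> \<pi> ` {..<K}" unfolding q_def pi_min_def using K0 by (intro Min_in) auto
  have q0: "q > 0" using qin pi_pos by auto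
  have qle: "q \<le> \<pi> i" if "i < K" for i unfolding q_def pi_min_def using that by (intro Min_le) auto
  have pi1: "\<pi> i \<le> 1" if "i < K" for i
  proof -
    have "\<pi> i \<le> (\<Sum>j<K. \<pi> j)" using that pi_pos by (intro member_le_sum) (auto simp: less_imp_le)
    then show ?thesis using pi_sum by simp
  qed
  have qhalf: "q \<le> 1/2"
  proof -
    have "(\<Sum>j<K. q) \<le> (\<Sum>j<K. \<pi> j)" using qle by (intro sum_mono) auto
    then have "real K * q \<le> 1" using pi_sum by simp
    moreover have "2 * q \<le> real K * q" using K2 q0 by (intro mult_right_mono) auto
    ultimately show ?thesis by simp
  qed
  have Lge: "Q0 k l \<le> L" if "k < K" "l < K" for k l
    unfolding L_def Lmax_def using that by (intro Max_ge finite_pat2) auto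
  have Lle1: "L \<le> 1"
  proof -
    have "L \<in> {Q0 k l | k l. k < K \<and> l < K}" unfolding L_def Lmax_def using K0
      by (intro Max_in finite_pat2) auto
    then show ?thesis using Q0_range by auto
  qed
  have D2le: "D2 \<le> (\<Sum>r<K. (Q0 r k - Q0 r j)^2)" if "k < K" "j < K" "j \<noteq> k" for k j
    unfolding D2_def Dsq_def using that by (intro Min_le finite_pat) blast
  have L0: "L > 0"
  proof -
    have ne: "(\<Sum>r<K. (Q0 r 1 - Q0 r 0)^2) \<in> {(\<Sum>r<K. (Q0 r k - Q0 r l)^2) | k l. k < K \<and> l < K \<and> l \<noteq> k}"
      using K2 by (intro CollectI exI[of _ 1] exI[of _ 0]) simp
    have "D2 \<in> {(\<Sum>r<K. (Q0 r k - Q0 r l)^2) | k l. k < K \<and> l < K \<and> l \<noteq> k}"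
      unfolding D2_def Dsq_def using ne by (intro Min_in finite_pat) blast+
    then obtain k l where kl: "k < K" "l < K" "D2 = (\<Sum>r<K. (Q0 r k - Q0 r l)^2)" by blast
    have "\<exists>r<K. Q0 r k \<noteq> Q0 r l"
    proof (rule ccontr)
      assume "\<not> ?thesis"
      then have "D2 = 0" using kl by simp
      then show False using D_pos unfolding D2_def by simp
    qed
    then obtain r where r: "r < K" "Q0 r k \<noteq> Q0 r l" by blast
    have "0 \<le> Q0 r k" "0 \<le> Q0 r l" using Q0_range kl r by auto
    then have "Q0 r k > 0 \<or> Q0 r l > 0" using r(2) by linarith
    moreover have "Q0 r k \<le> L" "Q0 r l \<le> L" using Lge r kl by auto
    ultimately show ?thesis by linarith
  qed
  have D0: "D2 > 0" using D_pos unfolding D2_def .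
  have c2a: "real n * \<alpha> > 2 / (L * q)" using cond2 unfolding L_def q_def by simp
  have c2b: "real n * \<alpha> > 4 * L * c'' / (q^2 * D2)" using cond2 unfolding L_def q_def D2_def by simp
  have n4: "real n > 4"
  proof -
    have "L * q \<le> 1 * (1/2)" using Lle1 qhalf L0 q0 by (intro mult_mono) auto
    then have "2 / (L * q) \<ge> 2 / (1/2)" using L0 q0 by (intro divide_left_mono) auto
    then have "real n * \<alpha> > 4" using c2a by simp
    moreover have "real n * \<alpha> \<le> real n" using alpha by (simp add: mult_left_le)
    ultimately show ?thesis by simp
  qed
  have n0: "n > 0" using n4 by simp
  have lnpos: "ln (real n) > 0" using n4 by simp
  have Qr: "\<forall>i<n. \<forall>j<n. 0 \<le> Q (C i) (C j) \<and> Q (C i) (C j) \<le> 1" if C: "C \<in> labelings n K" for C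
  proof (intro allI impI)
    fix i j assume ij: "i < n" "j < n"
    then have "C i < K" "C j < K" using C unfolding labelings_def by auto
    then have r: "0 \<le> Q0 (C i) (C j)" "Q0 (C i) (C j) \<le> 1" using Q0_range by auto
    have "\<alpha> * Q0 (C i) (C j) \<le> 1 * 1" using r alpha by (intro mult_mono) auto
    then show "0 \<le> Q (C i) (C j) \<and> Q (C i) (C j) \<le> 1" unfolding Q_def using r alpha by simp
  qed
  define thr where "thr = exp (- c' * (real n * \<alpha> * q * D2 / L) / 2)"
  define ev where "ev C = (\<lambda>E. err n K (alg E) C > thr)" for C
  define bad where "bad k = {C \<in> labelings n K. real (card (community n C k)) < real n * q / 2}" for k
  have finlab: "finite (labelings n K)" unfolding labelings_def by (simp add: finite_PiE)
  have goodb: "sbm_prob Q n C (ev C) \<le> c / (real n)^2"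
    if C: "C \<in> labelings n K" and good: "\<forall>k<K. \<not> real (card (community n C k)) < real n * q / 2" for C
  proof -
    define msz where "msz = (\<lambda>k. real (card (community n C k)))"
    define m where "m = Min (msz ` {..<K})"
    define Delta2 where "Delta2 = Min {(\<Sum>l<K. msz l * (Q k l - Q j l)^2) | k j. k < K \<and> j < K \<and> k \<noteq> j}"
    define s2 where "s2 = Delta2 / (\<alpha> * L)"
    have G: "m > 0 \<and> 1 / m \<le> \<alpha> * L \<and> \<alpha> * L \<le> 1 / ln (real n) \<and> s2 \<ge> c'' * real n / m \<longrightarrow>
        sbm_prob Q n C (\<lambda>E. err n K (alg E) C > exp (- c' * s2)) \<le> c / (real n)^2"
      using GV C unfolding GV_guarantee_def Let_def msz_def m_def Delta2_def s2_def Q_def L_def by blast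
    have mge: "m \<ge> real n * q / 2"
      unfolding m_def using K0 good by (subst Min_ge_iff) (auto simp: msz_def not_less)
    have mle: "m \<le> msz l" if "l < K" for l unfolding m_def using that by (intro Min_le) auto
    have m0: "m > 0" using mge n0 q0 by (smt (verit) divide_pos_pos of_nat_0_less_iff mult_pos_pos)
    have Dge: "Delta2 \<ge> m * \<alpha>^2 * D2"
    proof -
      have ne: "(\<Sum>l<K. msz l * (Q 1 l - Q 0 l)^2) \<in> {(\<Sum>l<K. msz l * (Q k l - Q j l)^2) | k j. k < K \<and> j < K \<and> k \<noteq> j}"
        using K2 by (intro CollectI exI[of _ 1] exI[of _ 0]) simp
      show ?thesis unfolding Delta2_def
      proof (subst Min_ge_iff)
        show "finite {(\<Sum>l<K. msz l * (Q k l - Q j l)^2) | k j. k < K \<and> j < K \<and> k \<noteq> j}" by (rule finite_pat)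
        show "{(\<Sum>l<K. msz l * (Q k l - Q j l)^2) | k j. k < K \<and> j < K \<and> k \<noteq> j} \<noteq> {}" using ne by blast
        show "\<forall>a\<in>{(\<Sum>l<K. msz l * (Q k l - Q j l)^2) | k j. k < K \<and> j < K \<and> k \<noteq> j}. m * \<alpha>^2 * D2 \<le> a"
        proof
          fix a assume "a \<in> {(\<Sum>l<K. msz l * (Q k l - Q j l)^2) | k j. k < K \<and> j < K \<and> k \<noteq> j}"
          then obtain k j where kj: "k < K" "j < K" "k \<noteq> j" "a = (\<Sum>l<K. msz l * (Q k l - Q j l)^2)" by blast
          have "m * \<alpha>^2 * D2 \<le> m * \<alpha>^2 * (\<Sum>r<K. (Q0 r k - Q0 r j)^2)"
            using D2le[of k j] kj m0 by (intro mult_left_mono) auto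
          also have "\<dots> = (\<Sum>l<K. m * (\<alpha>^2 * (Q0 k l - Q0 j l)^2))"
            using Q0_sym kj by (simp add: sum_distrib_left mult.assoc)
          also have "\<dots> \<le> (\<Sum>l<K. msz l * (Q k l - Q j l)^2)"
          proof (rule sum_mono)
            fix l assume "l \<in> {..<K}"
            then have "m \<le> msz l" using mle by auto
            moreover have "(Q k l - Q j l)^2 = \<alpha>^2 * (Q0 k l - Q0 j l)^2"
              unfolding Q_def by (simp add: power2_eq_square algebra_simps)
            ultimately show "m * (\<alpha>^2 * (Q0 k l - Q0 j l)^2) \<le> msz l * (Q k l - Q j l)^2"
              by (simp add: mult_right_mono)
          qed
          finally show "m * \<alpha>^2 * D2 \<le> a" using kj by simp
        qed
      qed
    qed
    have aL: "\<alpha> * L > 0" using alpha L0 by simp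
    have s2ge: "s2 \<ge> m * \<alpha> * D2 / L"
    proof -
      have "m * \<alpha> * D2 / L = (m * \<alpha>^2 * D2) / (\<alpha> * L)" using alpha L0 by (simp add: power2_eq_square field_simps)
      also have "\<dots> \<le> Delta2 / (\<alpha> * L)" using Dge aL by (intro divide_right_mono) auto
      finally show ?thesis unfolding s2_def .
    qed
    have C1: "1 / m \<le> \<alpha> * L"
    proof -
      have "real n * \<alpha> * (L * q) > 2" using c2a L0 q0 by (simp add: divide_less_eq mult.commute)
      then have "\<alpha> * L * (real n * q / 2) > 1" by (simp add: algebra_simps)
      moreover have "\<alpha> * L * (real n * q / 2) \<le> \<alpha> * L * m" using mge aL by (intro mult_left_mono) auto
      ultimately have "\<alpha> * L * m \<ge> 1" by simp
      then show ?thesis using m0 by (simp add: divide_le_eq mult.commute)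
    qed
    have C2: "\<alpha> * L \<le> 1 / ln (real n)"
    proof -
      have "\<alpha> * ln (real n) * L \<le> 1" using cond1 L0 unfolding L_def[symmetric] by (simp add: le_divide_eq)
      then show ?thesis using lnpos by (simp add: le_divide_eq mult.commute mult.left_commute)
    qed
    have C3: "s2 \<ge> c'' * real n / m"
    proof -
      have "real n * \<alpha> * (q^2 * D2) > 4 * L * c''" using c2b q0 D0 by (simp add: divide_less_eq)
      then have A: "(real n * q / 2)^2 * \<alpha> * D2 > c'' * real n * L"
        using n0 by (simp add: power2_eq_square algebra_simps)
      have "(real n * q / 2)^2 \<le> m^2" using mge n0 q0 by (intro power_mono) auto
      then have "(real n * q / 2)^2 * (\<alpha> * D2) \<le> m^2 * (\<alpha> * D2)" using alpha D0 by (intro mult_right_mono) auto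
      then have "c'' * real n * L \<le> m^2 * \<alpha> * D2" using A by (simp add: mult.assoc)
      then have "c'' * real n / m \<le> m * \<alpha> * D2 / L" using m0 L0 by (simp add: field_simps power2_eq_square)
      then show ?thesis using s2ge by simp
    qed
    have "sbm_prob Q n C (\<lambda>E. err n K (alg E) C > exp (- c' * s2)) \<le> c / (real n)^2"
      using G m0 C1 C2 C3 by blast
    moreover have "sbm_prob Q n C (ev C) \<le> sbm_prob Q n C (\<lambda>E. err n K (alg E) C > exp (- c' * s2))"
    proof (rule sbm_prob_mono[where Q=Q and n=n and C=C, OF Qr[OF C]])
      fix E assume "ev C E"
      then have e1: "err n K (alg E) C > thr" unfolding ev_def by simp
      have "real n * \<alpha> * q * D2 / L / 2 \<le> m * \<alpha> * D2 / L"
      proof -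
        have "real n * q / 2 * (\<alpha> * D2 / L) \<le> m * (\<alpha> * D2 / L)" using mge alpha D0 L0 by (intro mult_right_mono) auto
        then show ?thesis by (simp add: algebra_simps)
      qed
      then have "real n * \<alpha> * q * D2 / L / 2 \<le> s2" using s2ge by simp
      then have "c' * (real n * \<alpha> * q * D2 / L / 2) \<le> c' * s2" using c_pos by (intro mult_left_mono) auto
      moreover have "- c' * (real n * \<alpha> * q * D2 / L) / 2 = - (c' * (real n * \<alpha> * q * D2 / L / 2))" by simp
      ultimately have "- c' * s2 \<le> - c' * (real n * \<alpha> * q * D2 / L) / 2" by linarith
      then have "exp (- c' * s2) \<le> thr" unfolding thr_def by simp
      then show "err n K (alg E) C > exp (- c' * s2)" using e1 by simp
    qed
    ultimately show ?thesis by simp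
  qed
  have each: "sbm_prob Q n C (ev C) \<le> c / (real n)^2 + (\<Sum>k<K. if C \<in> bad k then 1 else 0)"
    if C: "C \<in> labelings n K" for C
  proof (cases "\<forall>k<K. \<not> real (card (community n C k)) < real n * q / 2")
    case True
    have "(\<Sum>k<K. if C \<in> bad k then 1 else (0::real)) \<ge> 0" by (intro sum_nonneg) auto
    then show ?thesis using goodb[OF C True] by linarith
  next
    case False
    then obtain k where k: "k < K" "real (card (community n C k)) < real n * q / 2" by auto
    have "1 \<le> (\<Sum>k<K. if C \<in> bad k then 1 else (0::real))"
    proof -
      have "(if C \<in> bad k then 1 else (0::real)) \<le> (\<Sum>k<K. if C \<in> bad k then 1 else 0)"
        using k by (intro member_le_sum) auto
      then show ?thesis using k C unfolding bad_def by simp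
    qed
    moreover have "sbm_prob Q n C (ev C) \<le> 1" by (rule sbm_prob_le1[where Q=Q and n=n and C=C, OF Qr[OF C]])
    moreover have "c / (real n)^2 \<ge> 0" using c_pos by simp
    ultimately show ?thesis by linarith
  qed
  have mwn: "markov_weight P \<pi> n C \<ge> 0" if "C \<in> labelings n K" for C using mw_nonneg that by blast
  have main: "msbm_prob K P \<pi> Q n ev \<le> c / (real n)^2 + (\<Sum>k<K. \<Sum>C\<in>bad k. markov_weight P \<pi> n C)"
  proof -
    have "msbm_prob K P \<pi> Q n ev \<le> (\<Sum>C\<in>labelings n K. markov_weight P \<pi> n C * (c / (real n)^2 + (\<Sum>k<K. if C \<in> bad k then 1 else 0)))"
      unfolding msbm_prob_def using each mwn by (intro sum_mono mult_left_mono) auto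
    also have "\<dots> = c / (real n)^2 * (\<Sum>C\<in>labelings n K. markov_weight P \<pi> n C) +
        (\<Sum>k<K. \<Sum>C\<in>labelings n K. if C \<in> bad k then markov_weight P \<pi> n C else 0)"
    proof -
      have e1: "markov_weight P \<pi> n C * (c / (real n)^2 + (\<Sum>k<K. if C \<in> bad k then 1 else 0)) =
          c / (real n)^2 * markov_weight P \<pi> n C + (\<Sum>k<K. if C \<in> bad k then markov_weight P \<pi> n C else 0)" for C
      proof -
        have "markov_weight P \<pi> n C * (\<Sum>k<K. if C \<in> bad k then 1 else 0) = (\<Sum>k<K. if C \<in> bad k then markov_weight P \<pi> n C else 0)"
          by (simp add: sum_distrib_left if_distrib cong: if_cong)
        then show ?thesis by (simp add: distrib_left)
      qed
      have "(\<Sum>C\<in>labelings n K. markov_weight P \<pi> n C * (c / (real n)^2 + (\<Sum>k<K. if C \<in> bad k then 1 else 0)))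
          = c / (real n)^2 * (\<Sum>C\<in>labelings n K. markov_weight P \<pi> n C) +
            (\<Sum>C\<in>labelings n K. \<Sum>k<K. if C \<in> bad k then markov_weight P \<pi> n C else 0)"
        unfolding e1 by (simp add: sum.distrib sum_distrib_left)
      also have "(\<Sum>C\<in>labelings n K. \<Sum>k<K. if C \<in> bad k then markov_weight P \<pi> n C else 0) =
          (\<Sum>k<K. \<Sum>C\<in>labelings n K. if C \<in> bad k then markov_weight P \<pi> n C else 0)"
        by (rule sum.swap)
      finally show ?thesis .
    qed
    also have "(\<Sum>k<K. \<Sum>C\<in>labelings n K. if C \<in> bad k then markov_weight P \<pi> n C else 0) = (\<Sum>k<K. \<Sum>C\<in>bad k. markov_weight P \<pi> n C)"
    proof (rule sum.cong[OF refl])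
      fix k
      have "bad k = {C \<in> labelings n K. C \<in> bad k}" unfolding bad_def by auto
      then show "(\<Sum>C\<in>labelings n K. if C \<in> bad k then markov_weight P \<pi> n C else 0) = (\<Sum>C\<in>bad k. markov_weight P \<pi> n C)"
        using sum.inter_filter[OF finlab, of "markov_weight P \<pi> n" "\<lambda>C. C \<in> bad k"] by simp
    qed
    finally show ?thesis using mw_total[OF n0] by simp
  qed
  have le1: "msbm_prob K P \<pi> Q n ev \<le> 1"
  proof -
    have "msbm_prob K P \<pi> Q n ev \<le> (\<Sum>C\<in>labelings n K. markov_weight P \<pi> n C * 1)"
      unfolding msbm_prob_def using sbm_prob_le1[where Q=Q and n=n, OF Qr] mwn by (intro sum_mono mult_left_mono) auto
    then show ?thesis using mw_total[OF n0] by simp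
  qed
  have final: "msbm_prob K P \<pi> Q n ev \<le> c / (real n)^2 + 2 * real K * exp (- real n * q^2 / den)"
  proof (cases "lam < 1")
    case False
    have A1n: "A1 lam \<le> 0" unfolding A1_def using False by (simp add: divide_nonneg_nonpos)
    have A2n: "A2 lam \<le> 0" unfolding A2_def using False by (simp add: divide_nonneg_nonpos)
    have "den \<le> 0" unfolding den_def using A1n A2n q0 by (simp add: add_nonpos_nonpos mult_nonpos_nonneg)
    moreover have "real n * q^2 \<ge> 0" by simp
    ultimately have "real n * q^2 / den \<le> 0" by (simp add: divide_nonneg_nonpos)
    then have "- real n * q^2 / den \<ge> 0" by simp
    then have "exp (- real n * q^2 / den) \<ge> 1" by simp
    then have "2 * real K * exp (- real n * q^2 / den) \<ge> 2 * real K * 1" using K0 by (intro mult_left_mono) auto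
    moreover have "2 * real K * 1 \<ge> 1" using K0 by simp
    ultimately have "2 * real K * exp (- real n * q^2 / den) \<ge> 1" by linarith
    moreover have "c / (real n)^2 \<ge> 0" using c_pos by simp
    ultimately show ?thesis using le1 by linarith
  next
    case True
    have kb: "(\<Sum>C\<in>bad k. markov_weight P \<pi> n C) \<le> exp (- real n * q^2 / den)" if k: "k < K" for k
    proof -
      have p: "q \<le> \<pi> k" "\<pi> k \<le> 1" using qle pi1 k by auto
      obtain \<theta> b l where th: "\<theta> > 0" and lb: "l = max lam 0" and l1: "l < 1" and bl: "b > l"
        and F: "(1 - l) * (\<pi> k * exp (-\<theta>) / (b - l * exp (-\<theta>)) + (1 - \<pi> k) / (b - l)) \<le> 1"
        and hb: "1 - \<pi> k + \<pi> k * exp (-\<theta>) \<le> b" and ineq: "\<theta> * q / 2 + ln b \<le> - (q^2 / den)"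
      proof (cases "lam \<le> 0")
        case True
        have "den = 2 * 1 + 4 * (1/3) * q" unfolding den_def A1_def A2_def using True by simp
        then show ?thesis using ana_i[OF q0 qhalf p] that[of _ 0] True by auto
      next
        case False
        have "den = 2 * ((1 + lam) / (1 - lam)) + 4 * (5 / (1 - lam)) * q" unfolding den_def A1_def A2_def using False by simp
        then show ?thesis using ana_ii[OF q0 qhalf p, of lam] \<open>lam < 1\<close> False that[of _ lam] by auto
      qed
      have b0: "b > 0" using bl lb by simp
      have "(\<Sum>C\<in>bad k. markov_weight P \<pi> n C) \<le> exp (\<theta> * (real n * q / 2)) * b^n"
        unfolding bad_def by (rule conc[OF K0 k n0 th lb[unfolded lam_def] l1 bl F hb])
      also have "\<dots> = exp (real n * (\<theta> * q / 2 + ln b))"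
      proof -
        have bn: "b^n = exp (real n * ln b)" using b0 by (simp add: exp_of_nat_mult)
        have "exp (\<theta> * (real n * q / 2)) * b^n = exp (\<theta> * (real n * q / 2) + real n * ln b)"
          unfolding bn by (simp add: exp_add)
        also have "\<theta> * (real n * q / 2) + real n * ln b = real n * (\<theta> * q / 2 + ln b)" by (simp add: algebra_simps)
        finally show ?thesis .
      qed
      also have "\<dots> \<le> exp (real n * (- (q^2 / den)))"
      proof -
        have "real n * (\<theta> * q / 2 + ln b) \<le> real n * (- (q^2 / den))" using ineq by (intro mult_left_mono) auto
        then show ?thesis by simp
      qed
      also have "\<dots> = exp (- real n * q^2 / den)" by simp
      finally show ?thesis .
    qed
    have "(\<Sum>k<K. \<Sum>C\<in>bad k. markov_weight P \<pi> n C) \<le> (\<Sum>k<K. exp (- real n * q^2 / den))"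
      using kb by (intro sum_mono) auto
    also have "\<dots> \<le> 2 * real K * exp (- real n * q^2 / den)" by simp
    finally show ?thesis using main by simp
  qed
  show ?thesis using final unfolding q_def L_def D2_def lam_def Q_def den_def ev_def thr_def .
qed


end
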